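(* In the protocol IT-HS described in the context, with $f<\frac{n}{3}$ Byzantine parties, if two nonfaulty parties send the messages $\langle done,val\rangle$ and $\langle done,val'\rangle$ via the final handler of message processing (i.e. upon receiving $\langle lock,\cdot,v\rangle$ messages with the same value from $n-f$ parties), then $val=val'$.
   Context: Model. $n$ parties with inputs $x_i$; up to $f$ Byzantine (arbitrary behaviour), the rest nonfaulty; authenticated point-to-point channels; partial synchrony: after an unknown time GST every message arrives within known $\Delta$ time and clocks are synchronized, before GST delays are arbitrary but finite. Protocol IT-HS (party $i$). Variables: $lock\gets 0$, $lock\_val\gets x_i$; $key3\gets 0$, $key3\_val\gets x_i$; $key2\gets 0$, $key2\_val\gets x_i$, $prev\_key2\gets -1$; $key1\gets 0$, $key1\_val\gets x_i$, $prev\_key1\gets -1$; $view\gets 0$; $highest\_request[j]\gets 0$, $highest\_abort[j]\gets 0$ for $j\in[n]$. "Send-upon-join $m$": for each $j$, send $m$ to $j$ as soon as $highest\_request[j]$ equals the current view. Background: (B1) on $\langle request,v\rangle$ from $j$, $highest\_request[j]\gets\max(highest\_request[j],v)$. (B2) on $\langle done,val\rangle$ from $f+1$ parties with the same $val$: if no $done$ sent yet, send $\langle done,val\rangle$ to all. (B3) on $\langle done,val\rangle$ from $n-f$ parties with the same $val$: decide $val$, terminate. (B4) on $\langle abort,v\rangle$ from $j$ with $highest\_abort[j]<v$: $highest\_abort[j]\gets v$; $u\gets$ the $(f+1)$-th largest entry of $highest\_abort$; if $u>highest\_abort[i]$ send $\langle abort,u\rangle$ to all and set $highest\_abort[i]\gets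 u$; $w\gets$ the $(n-f)$-th largest entry; if $w\ge view$ set $view\gets w+1$. Views: for each value $v$ of $view$, while $view=v$: fresh per-view state; after $11\Delta$ local time send $\langle abort,v\rangle$ to all; ignore other views' messages except $abort$, $done$, $request$; primary $p=(v\bmod n)+1$. View change: send $\langle request,v\rangle$ to all; when $highest\_request[p]=v$ send $\langle suggest,key3,key3\_val,key2,key2\_val,prev\_key2,v\rangle$ to $p$; send-upon-join $\langle proof,key1,key1\_val,prev\_key1,v\rangle$. If $i=p$: upon first $\langle suggest,k3,v3,k2,v2,pk2,v\rangle$ from a party, if $pk2<k2<v$ add $(k2,v2,pk2)$ to $key2\_proofs$; if $k3=0$ add $(k3,v3)$ to $suggestions$; else if $k3<v$ add $(k3,v3)$ as soon as at least $f+1$ triples $(k,w,pk)\in key2\_proofs$ satisfy $k3\le pk$ or ($k3\le k$ and $w=v3$); once $|suggestions|\ge n-f$, send-upon-join $\langle propose,k,w,v\rangle$ for $(k,w)\in suggestions$ with maximal $k$. Message processing: upon first $\langle proof,k1,v1,pk1,v\rangle$ from a party, if $v>k1>pk1$ add $(k1,v1,pk1)$ to $proofs$. Upon first $\langle propose,key,val,v\rangle$ from $p$: if $lock=0$ or $val=lock\_val$, send-upon-join $\langle echo,val,v\rangle$; else if $v>key\ge lock$, then once at least $f+1$ triples $(k,w,pk)\in proofs$ satisfy $lock\le pk$ or ($lock\le k$ and $w\ne lock\_val$), send-upon-join $\langle echo,val,v\rangle$. Upon $\langle echo,val,v\rangle$ from $n-f$ parties with the same $val$: send-upon-join $\langle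 key1,val,v\rangle$; if $key1\_val\ne val$ then $prev\_key1\gets key1$, $key1\_val\gets val$; $key1\gets v$. Upon $\langle key1,val,v\rangle$ from $n-f$ parties (same $val$): send-upon-join $\langle key2,val,v\rangle$; if $key2\_val\ne val$ then $prev\_key2\gets key2$, $key2\_val\gets val$; $key2\gets v$. Upon $\langle key2,val,v\rangle$ from $n-f$ (same $val$): send-upon-join $\langle key3,val,v\rangle$; $key3\gets v$, $key3\_val\gets val$. Upon $\langle key3,val,v\rangle$ from $n-f$ (same $val$): send-upon-join $\langle lock,val,v\rangle$; $lock\gets v$, $lock\_val\gets val$. Final handler: upon $\langle lock,val,v\rangle$ from $n-f$ (same $val$): if no $done$ sent yet, send $\langle done,val\rangle$ to all. *)

theory Defs
  imports Main "HOL-Library.Multiset"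
begin

(* Parties are 1..n; primary of view v is (v mod n) + 1.
   Keys (key1, key2, key3, lock and the prev_ fields) are integers
   (prev fields start at -1); views are natural numbers.
   ================================================================ *)

datatype 'v msg =
    MRequest nat
  | MDone 'v
  | MAbort nat
  | MSuggest int 'v int 'v int nat      (* k3 v3 k2 v2 pk2 view *)
  | MProof int 'v int nat               (* k1 v1 pk1 view *)
  | MPropose int 'v nat                 (* key val view *)
  | MEcho 'v nat
  | MKey1 'v nat
  | MKey2 'v nat
  | MKey3 'v nat
  | MLock 'v nat

record 'v lst =
  lock :: int
  lock_val :: 'v
  key3 :: int
  key3_val :: 'v
  key2 :: int
  key2_val :: 'v
  prev_key2 :: int
  key1 :: int
  key1_val :: 'v
  prev_key1 :: int
  view :: nat
  hreq :: "nat \<Rightarrow> nat"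
  habort :: "nat \<Rightarrow> nat"
  done_sent :: bool
  done_from :: "'v \<Rightarrow> nat set"
  decided :: "'v option"              (* Some val = decided val and terminated *)
  done_by_lock :: "'v option"         (* ghost: Some val iff done val was sent by the final handler *)
  (* fresh per-view state *)
  timer_fired :: bool                 (* abort for the current view already sent by the timer *)
  suggest_sent :: bool
  pending :: "'v msg set"             (* messages to be sent via send-upon-join *)
  joined :: "(nat \<times> 'v msg) set"   (* (j, m): m already sent to j via send-upon-join *)
  sugg_from :: "nat set"
  key2_proofs :: "nat \<Rightarrow> (int \<times> 'v \<times> int) option"
  suggestions :: "nat \<Rightarrow> (int \<times> 'v) option"
  sugg_wait :: "nat \<Rightarrow> (int \<times> 'v) option"  (* suggestions waiting for key2 proofs *)
  proposed :: bool
  proof_from :: "nat set"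
  proofs :: "nat \<Rightarrow> (int \<times> 'v \<times> int) option"
  propose_recv :: bool
  echo_wait :: "'v option"            (* proposal waiting for f+1 proofs before echoing *)
  echo_from :: "'v \<Rightarrow> nat set"
  key1_from :: "'v \<Rightarrow> nat set"
  key2_from :: "'v \<Rightarrow> nat set"
  key3_from :: "'v \<Rightarrow> nat set"
  lock_from :: "'v \<Rightarrow> nat set"

record 'v gst =
  loc :: "nat \<Rightarrow> 'v lst"
  net :: "(nat \<times> nat \<times> 'v msg) multiset"   (* in-flight messages (sender, receiver, msg) *)

definition primary :: "nat \<Rightarrow> nat \<Rightarrow> nat" where
  "primary n v = v mod n + 1"

definition to_all :: "nat \<Rightarrow> 'v msg \<Rightarrow> (nat \<times> 'v msg) list" where
  "to_all n m = map (\<lambda>k. (k, m)) [1..<Suc n]"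

definition kth_largest :: "nat \<Rightarrow> (nat \<Rightarrow> nat) \<Rightarrow> nat \<Rightarrow> nat" where
  "kth_largest n h k = rev (sort (map h [1..<Suc n])) ! (k - 1)"

definition crosses :: "nat \<Rightarrow> nat set \<Rightarrow> nat set \<Rightarrow> bool" where
  "crosses t A B \<longleftrightarrow> card A < t \<and> t \<le> card B"

definition enter_view :: "nat \<Rightarrow> nat \<Rightarrow> 'v lst \<Rightarrow> 'v lst \<times> (nat \<times> 'v msg) list" where
  "enter_view n v s =
    (s\<lparr>view := v, timer_fired := False, suggest_sent := False,
       pending := {MProof (key1 s) (key1_val s) (prev_key1 s) v}, joined := {},
       sugg_from := {}, key2_proofs := (\<lambda>_. None), suggestions := (\<lambda>_. None),
       sugg_wait := (\<lambda>_. None), proposed := False, proof_from := {}, proofs := (\<lambda>_. None),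
       propose_recv := False, echo_wait := None, echo_from := (\<lambda>_. {}),
       key1_from := (\<lambda>_. {}), key2_from := (\<lambda>_. {}), key3_from := (\<lambda>_. {}),
       lock_from := (\<lambda>_. {})\<rparr>,
     to_all n (MRequest v))"

definition base_state :: "('p \<Rightarrow> 'v) \<Rightarrow> 'p \<Rightarrow> 'v lst" where
  "base_state x i =
    \<lparr>lock = 0, lock_val = x i, key3 = 0, key3_val = x i, key2 = 0, key2_val = x i,
     prev_key2 = -1, key1 = 0, key1_val = x i, prev_key1 = -1, view = 0,
     hreq = (\<lambda>_. 0), habort = (\<lambda>_. 0), done_sent = False, done_from = (\<lambda>_. {}),
     decided = None, done_by_lock = None,
     timer_fired = False, suggest_sent = False, pending = {}, joined = {},
     sugg_from = {}, key2_proofs = (\<lambda>_. None), suggestions = (\<lambda>_. None),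
     sugg_wait = (\<lambda>_. None), proposed = False, proof_from = {}, proofs = (\<lambda>_. None),
     propose_recv = False, echo_wait = None, echo_from = (\<lambda>_. {}),
     key1_from = (\<lambda>_. {}), key2_from = (\<lambda>_. {}), key3_from = (\<lambda>_. {}),
     lock_from = (\<lambda>_. {})\<rparr>"

definition init_local :: "nat \<Rightarrow> (nat \<Rightarrow> 'v) \<Rightarrow> nat \<Rightarrow> 'v lst" where
  "init_local n x i = fst (enter_view n 1 (base_state x i))"

definition init_gst :: "nat \<Rightarrow> nat set \<Rightarrow> (nat \<Rightarrow> 'v) \<Rightarrow> 'v gst" where
  "init_gst n F x =
    \<lparr>loc = init_local n x,
     net = mset [(i, k, MRequest 1). i \<leftarrow> [1..<Suc n], i \<notin> F, k \<leftarrow> [1..<Suc n]]\<rparr>"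

definition recv_done :: "nat \<Rightarrow> nat \<Rightarrow> nat \<Rightarrow> 'v \<Rightarrow> 'v lst \<Rightarrow> 'v lst \<times> (nat \<times> 'v msg) list" where
  "recv_done n f j val s =
    (let D = insert j (done_from s val);
         s1 = s\<lparr>done_from := (done_from s)(val := D)\<rparr>;
         r2 = (if crosses (f + 1) (done_from s val) D \<and> \<not> done_sent s1
               then (s1\<lparr>done_sent := True\<rparr>, to_all n (MDone val)) else (s1, []));
         s3 = (if crosses (n - f) (done_from s val) D then (fst r2)\<lparr>decided := Some val\<rparr> else fst r2)
     in (s3, snd r2))"

definition recv_abort :: "nat \<Rightarrow> nat \<Rightarrow> nat \<Rightarrow> nat \<Rightarrow> nat \<Rightarrow> 'v lst \<Rightarrow> 'v lst \<times> (nat \<times> 'v msg) list" where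
  "recv_abort n f i j v s =
    (if habort s j < v then
       (let H = (habort s)(j := v);
            u = kth_largest n H (f + 1);
            r1 = (if u > H i then (s\<lparr>habort := H(i := u)\<rparr>, to_all n (MAbort u))
                  else (s\<lparr>habort := H\<rparr>, []));
            w = kth_largest n (habort (fst r1)) (n - f)
        in if w \<ge> view (fst r1)
           then (let r2 = enter_view n (w + 1) (fst r1) in (fst r2, snd r1 @ snd r2))
           else r1)
     else (s, []))"

definition recv_suggest :: "nat \<Rightarrow> nat \<Rightarrow> nat \<Rightarrow> int \<Rightarrow> 'v \<Rightarrow> int \<Rightarrow> 'v \<Rightarrow> int \<Rightarrow> nat \<Rightarrow> 'v lst \<Rightarrow> 'v lst" where
  "recv_suggest n i j k3 v3 k2 v2 pk2 v s =
    (if v = view s \<and> i = primary n v \<and> j \<notin> sugg_from s then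
       (let s1 = s\<lparr>sugg_from := insert j (sugg_from s)\<rparr>;
            s2 = (if pk2 < k2 \<and> k2 < int v
                  then s1\<lparr>key2_proofs := (key2_proofs s1)(j := Some (k2, v2, pk2))\<rparr> else s1)
        in if k3 = 0 then s2\<lparr>suggestions := (suggestions s2)(j := Some (k3, v3))\<rparr>
           else if k3 < int v then s2\<lparr>sugg_wait := (sugg_wait s2)(j := Some (k3, v3))\<rparr>
           else s2)
     else s)"

definition recv_proof :: "nat \<Rightarrow> int \<Rightarrow> 'v \<Rightarrow> int \<Rightarrow> nat \<Rightarrow> 'v lst \<Rightarrow> 'v lst" where
  "recv_proof j k1 v1 pk1 v s =
    (if v = view s \<and> j \<notin> proof_from s then
       (let s1 = s\<lparr>proof_from := insert j (proof_from s)\<rparr>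
        in if int v > k1 \<and> k1 > pk1 then s1\<lparr>proofs := (proofs s1)(j := Some (k1, v1, pk1))\<rparr> else s1)
     else s)"

definition recv_propose :: "nat \<Rightarrow> nat \<Rightarrow> int \<Rightarrow> 'v \<Rightarrow> nat \<Rightarrow> 'v lst \<Rightarrow> 'v lst" where
  "recv_propose n j key val v s =
    (if v = view s \<and> j = primary n v \<and> \<not> propose_recv s then
       (let s1 = s\<lparr>propose_recv := True\<rparr>
        in if lock s1 = 0 \<or> val = lock_val s1 then s1\<lparr>pending := insert (MEcho val v) (pending s1)\<rparr>
           else if int v > key \<and> key \<ge> lock s1 then s1\<lparr>echo_wait := Some val\<rparr>
           else s1)
     else s)"

definition recv_echo :: "nat \<Rightarrow> nat \<Rightarrow> nat \<Rightarrow> 'v \<Rightarrow> nat \<Rightarrow> 'v lst \<Rightarrow> 'v lst" where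
  "recv_echo n f j val v s =
    (if v = view s then
       (let E = insert j (echo_from s val);
            s1 = s\<lparr>echo_from := (echo_from s)(val := E)\<rparr>
        in if crosses (n - f) (echo_from s val) E then
             s1\<lparr>pending := insert (MKey1 val v) (pending s1),
                prev_key1 := (if key1_val s1 \<noteq> val then key1 s1 else prev_key1 s1),
                key1_val := val, key1 := int v\<rparr>
           else s1)
     else s)"

definition recv_key1 :: "nat \<Rightarrow> nat \<Rightarrow> nat \<Rightarrow> 'v \<Rightarrow> nat \<Rightarrow> 'v lst \<Rightarrow> 'v lst" where
  "recv_key1 n f j val v s =
    (if v = view s then
       (let E = insert j (key1_from s val);
            s1 = s\<lparr>key1_from := (key1_from s)(val := E)\<rparr>
        in if crosses (n - f) (key1_from s val) E then
             s1\<lparr>pending := insert (MKey2 val v) (pending s1),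
                prev_key2 := (if key2_val s1 \<noteq> val then key2 s1 else prev_key2 s1),
                key2_val := val, key2 := int v\<rparr>
           else s1)
     else s)"

definition recv_key2 :: "nat \<Rightarrow> nat \<Rightarrow> nat \<Rightarrow> 'v \<Rightarrow> nat \<Rightarrow> 'v lst \<Rightarrow> 'v lst" where
  "recv_key2 n f j val v s =
    (if v = view s then
       (let E = insert j (key2_from s val);
            s1 = s\<lparr>key2_from := (key2_from s)(val := E)\<rparr>
        in if crosses (n - f) (key2_from s val) E then
             s1\<lparr>pending := insert (MKey3 val v) (pending s1), key3 := int v, key3_val := val\<rparr>
           else s1)
     else s)"

definition recv_key3 :: "nat \<Rightarrow> nat \<Rightarrow> nat \<Rightarrow> 'v \<Rightarrow> nat \<Rightarrow> 'v lst \<Rightarrow> 'v lst" where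
  "recv_key3 n f j val v s =
    (if v = view s then
       (let E = insert j (key3_from s val);
            s1 = s\<lparr>key3_from := (key3_from s)(val := E)\<rparr>
        in if crosses (n - f) (key3_from s val) E then
             s1\<lparr>pending := insert (MLock val v) (pending s1), lock := int v, lock_val := val\<rparr>
           else s1)
     else s)"

(* final handler *)
definition recv_lock :: "nat \<Rightarrow> nat \<Rightarrow> nat \<Rightarrow> 'v \<Rightarrow> nat \<Rightarrow> 'v lst \<Rightarrow> 'v lst \<times> (nat \<times> 'v msg) list" where
  "recv_lock n f j val v s =
    (if v = view s then
       (let E = insert j (lock_from s val);
            s1 = s\<lparr>lock_from := (lock_from s)(val := E)\<rparr>
        in if crosses (n - f) (lock_from s val) E \<and> \<not> done_sent s1 then
             (s1\<lparr>done_sent := True, done_by_lock := Some val\<rparr>, to_all n (MDone val))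
           else (s1, []))
     else (s, []))"

definition deliver :: "nat \<Rightarrow> nat \<Rightarrow> nat \<Rightarrow> nat \<Rightarrow> 'v msg \<Rightarrow> 'v lst \<Rightarrow> 'v lst \<times> (nat \<times> 'v msg) list" where
  "deliver n f i j m s =
    (case m of
       MRequest v \<Rightarrow> (s\<lparr>hreq := (hreq s)(j := max (hreq s j) v)\<rparr>, [])
     | MDone val \<Rightarrow> recv_done n f j val s
     | MAbort v \<Rightarrow> recv_abort n f i j v s
     | MSuggest k3 v3 k2 v2 pk2 v \<Rightarrow> (recv_suggest n i j k3 v3 k2 v2 pk2 v s, [])
     | MProof k1 v1 pk1 v \<Rightarrow> (recv_proof j k1 v1 pk1 v s, [])
     | MPropose key val v \<Rightarrow> (recv_propose n j key val v s, [])
     | MEcho val v \<Rightarrow> (recv_echo n f j val v s, [])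
     | MKey1 val v \<Rightarrow> (recv_key1 n f j val v s, [])
     | MKey2 val v \<Rightarrow> (recv_key2 n f j val v s, [])
     | MKey3 val v \<Rightarrow> (recv_key3 n f j val v s, [])
     | MLock val v \<Rightarrow> recv_lock n f j val v s)"

definition internal_step :: "nat \<Rightarrow> nat \<Rightarrow> nat \<Rightarrow> 'v lst \<Rightarrow> 'v lst \<Rightarrow> (nat \<times> 'v msg) list \<Rightarrow> bool" where
  "internal_step n f i s s' outs \<longleftrightarrow>
     \<comment> \<open>send-upon-join\<close>
     (\<exists>m j. m \<in> pending s \<and> j \<in> {1..n} \<and> hreq s j = view s \<and> (j, m) \<notin> joined s \<and>
            s' = s\<lparr>joined := insert (j, m) (joined s)\<rparr> \<and> outs = [(j, m)])
   \<or> \<comment> \<open>suggest to the primary once it joined the view\<close>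
     (\<not> suggest_sent s \<and> hreq s (primary n (view s)) = view s \<and>
      s' = s\<lparr>suggest_sent := True\<rparr> \<and>
      outs = [(primary n (view s),
               MSuggest (key3 s) (key3_val s) (key2 s) (key2_val s) (prev_key2 s) (view s))])
   \<or> \<comment> \<open>primary: accept a waiting suggestion once f+1 key2 proofs support it\<close>
     (\<exists>j k3 v3. sugg_wait s j = Some (k3, v3) \<and>
        f + 1 \<le> card {l. \<exists>k w pk. key2_proofs s l = Some (k, w, pk) \<and> (k3 \<le> pk \<or> (k3 \<le> k \<and> w = v3))} \<and>
        s' = s\<lparr>suggestions := (suggestions s)(j := Some (k3, v3)), sugg_wait := (sugg_wait s)(j := None)\<rparr> \<and>
        outs = [])
   \<or> \<comment> \<open>primary: propose a suggestion with maximal key once n-f suggestions are accepted\<close>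
     (\<exists>j k w. i = primary n (view s) \<and> \<not> proposed s \<and>
        n - f \<le> card {l. suggestions s l \<noteq> None} \<and>
        suggestions s j = Some (k, w) \<and> (\<forall>l k' w'. suggestions s l = Some (k', w') \<longrightarrow> k' \<le> k) \<and>
        s' = s\<lparr>proposed := True, pending := insert (MPropose k w (view s)) (pending s)\<rparr> \<and> outs = [])
   \<or> \<comment> \<open>echo a waiting proposal once f+1 proofs allow it\<close>
     (\<exists>val. echo_wait s = Some val \<and>
        f + 1 \<le> card {l. \<exists>k w pk. proofs s l = Some (k, w, pk) \<and>
                            (lock s \<le> pk \<or> (lock s \<le> k \<and> w \<noteq> lock_val s))} \<and>
        s' = s\<lparr>echo_wait := None, pending := insert (MEcho val (view s)) (pending s)\<rparr> \<and> outs = [])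
   \<or> \<comment> \<open>timer of the current view expires (may happen at any time: asynchrony)\<close>
     (\<not> timer_fired s \<and> s' = s\<lparr>timer_fired := True\<rparr> \<and> outs = to_all n (MAbort (view s)))"

inductive reachable :: "nat \<Rightarrow> nat \<Rightarrow> nat set \<Rightarrow> (nat \<Rightarrow> 'v) \<Rightarrow> 'v gst \<Rightarrow> bool"
  for n f :: nat and F :: "nat set" and x :: "nat \<Rightarrow> 'v" where
  init: "reachable n f F x (init_gst n F x)"
| deliver_step:
    "\<lbrakk> reachable n f F x s; (j, i, m) \<in># net s; i \<in> {1..n}; i \<notin> F;
       decided (loc s i) = None; deliver n f i j m (loc s i) = (s', outs) \<rbrakk>
     \<Longrightarrow> reachable n f F x
           \<lparr>loc = (loc s)(i := s'),
            net = net s - {#(j, i, m)#} + mset (map (\<lambda>(k, m'). (i, k, m')) outs)\<rparr>"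
| internal:
    "\<lbrakk> reachable n f F x s; i \<in> {1..n}; i \<notin> F; decided (loc s i) = None;
       internal_step n f i (loc s i) s' outs \<rbrakk>
     \<Longrightarrow> reachable n f F x
           \<lparr>loc = (loc s)(i := s'), net = net s + mset (map (\<lambda>(k, m'). (i, k, m')) outs)\<rparr>"
| byzantine:
    "\<lbrakk> reachable n f F x s; j \<in> F \<rbrakk>
     \<Longrightarrow> reachable n f F x (s\<lparr>net := net s + {#(j, k, m)#}\<rparr>)"

end

theory Submission
  imports Defs
begin

locale itsys =
  fixes n f :: nat and F :: "nat set"
  assumes nf: "3 * f < n" and FS: "F \<subseteq> {1..n}" and cF: "card F \<le> f"
begin

definition CERT :: "(nat \<times> 'v \<times> nat \<times> nat) set \<Rightarrow> 'v \<Rightarrow> nat \<Rightarrow> bool" where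
  "CERT G a v \<longleftrightarrow> (\<exists>S. S \<subseteq> {1..n} \<and> n - f \<le> card S \<and> (\<forall>j\<in>S. j \<notin> F \<longrightarrow> (\<exists>t. (j,a,v,t) \<in> G)))"

definition CERTb :: "(nat \<times> 'v \<times> nat \<times> nat) set \<Rightarrow> 'v \<Rightarrow> nat \<Rightarrow> nat \<Rightarrow> bool" where
  "CERTb G a v T \<longleftrightarrow> (\<exists>S. S \<subseteq> {1..n} \<and> n - f \<le> card S \<and> (\<forall>j\<in>S. j \<notin> F \<longrightarrow> (\<exists>t<T. (j,a,v,t) \<in> G)))"

definition GP :: "(nat \<times> 'v \<times> nat \<times> nat) set \<Rightarrow> int \<Rightarrow> 'v \<Rightarrow> int \<Rightarrow> bool" where
  "GP G k w pk \<longleftrightarrow> (1 \<le> k \<longrightarrow> CERT G w (nat k)) \<and> (1 \<le> pk \<longrightarrow> (\<exists>b. b \<noteq> w \<and> CERT G b (nat pk)))"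

definition LQ :: "(nat \<times> 'v \<times> nat) set \<Rightarrow> 'v \<Rightarrow> nat \<Rightarrow> bool" where
  "LQ GL a v \<longleftrightarrow> (\<exists>S. S \<subseteq> {1..n} \<and> n - f \<le> card S \<and> (\<forall>j\<in>S. j \<notin> F \<longrightarrow> (j,a,v) \<in> GL))"

definition EJ :: "(nat \<times> 'v \<times> nat \<times> nat) set \<Rightarrow> (nat \<times> 'v \<times> nat) set \<Rightarrow> nat \<Rightarrow> 'v \<Rightarrow> nat \<Rightarrow> nat \<Rightarrow> bool" where
  "EJ G GL l b u t \<longleftrightarrow> (\<exists>w0 c0. 0 \<le> w0 \<and> w0 \<le> int u \<and> (1 \<le> w0 \<longrightarrow> CERTb G c0 (nat w0) t) \<and>
      (\<forall>a v. (l,a,v) \<in> GL \<longrightarrow> v < u \<longrightarrow> int v \<le> w0) \<and>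
      (w0 = 0 \<or> b = c0 \<or> (\<exists>k w pk. pk < k \<and> k < int u \<and> GP G k w pk \<and> (w0 \<le> pk \<or> (w0 \<le> k \<and> w \<noteq> c0)))))"

definition GI :: "(nat \<times> 'v \<times> nat \<times> nat) set \<Rightarrow> (nat \<times> 'v \<times> nat) set \<Rightarrow> nat \<Rightarrow> bool" where
  "GI G GL clk \<longleftrightarrow>
    (\<forall>p a b u t t'. p \<notin> F \<longrightarrow> (p,a,u,t) \<in> G \<longrightarrow> (p,b,u,t') \<in> G \<longrightarrow> a = b) \<and>
    (\<forall>p b u t. (p,b,u,t) \<in> G \<longrightarrow> p \<notin> F \<longrightarrow> EJ G GL p b u t) \<and>
    (\<forall>p a v. (p,a,v) \<in> GL \<longrightarrow> p \<notin> F \<longrightarrow> CERT G a v \<and> 1 \<le> v) \<and>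
    (\<forall>p b u t. (p,b,u,t) \<in> G \<longrightarrow> t < clk)"

lemma GI_uniq: "GI G GL clk \<Longrightarrow> p \<notin> F \<Longrightarrow> (p,a,u,t) \<in> G \<Longrightarrow> (p,b,u,t') \<in> G \<Longrightarrow> a = b"
  unfolding GI_def by meson
lemma GI_EJ: "GI G GL clk \<Longrightarrow> (p,b,u,t) \<in> G \<Longrightarrow> p \<notin> F \<Longrightarrow> EJ G GL p b u t"
  unfolding GI_def by meson
lemma GI_GL: "GI G GL clk \<Longrightarrow> (p,a,v) \<in> GL \<Longrightarrow> p \<notin> F \<Longrightarrow> CERT G a v \<and> 1 \<le> v"
  unfolding GI_def by meson
lemma GI_clk: "GI G GL clk \<Longrightarrow> (p,b,u,t) \<in> G \<Longrightarrow> t < clk"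
  unfolding GI_def by meson

lemma finF: "finite F" using FS finite_subset by blast

lemma card_inter_big:
  assumes "A \<subseteq> {1..n}" "B \<subseteq> {1..n}"
  shows "card A + card B \<le> n + card (A \<inter> B)"
proof -
  have fA: "finite A" "finite B" using assms finite_subset by auto
  have "card (A \<union> B) \<le> n" using assms card_mono[of "{1..n}" "A \<union> B"] by auto
  moreover have "card (A \<union> B) + card (A \<inter> B) = card A + card B" using card_Un_Int fA by metis
  ultimately show ?thesis by linarith
qed

lemma exists_nonF:
  assumes "finite A" "card F < card A" shows "\<exists>j\<in>A. j \<notin> F"
proof (rule ccontr)
  assume "\<not> ?thesis" then have "A \<subseteq> F" by auto
  then have "card A \<le> card F" using finF card_mono by auto
  then show False using assms by auto
qed

lemma quorum_nonF:
  assumes "n - f \<le> card A" shows "\<exists>j\<in>A. j \<notin> F"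
proof -
  have "card F < card A" using assms cF nf by linarith
  moreover then have "finite A" using card_gt_0_iff by fastforce
  ultimately show ?thesis using exists_nonF by blast
qed

lemma two_quorums:
  assumes "A \<subseteq> {1..n}" "B \<subseteq> {1..n}" "n - f \<le> card A" "n - f \<le> card B"
  shows "\<exists>j\<in>A \<inter> B. j \<notin> F"
proof -
  have "card F < card (A \<inter> B)" using card_inter_big[OF assms(1,2)] assms(3,4) cF nf by linarith
  moreover have "finite (A \<inter> B)" using assms(1) finite_subset by blast
  ultimately show ?thesis using exists_nonF by blast
qed

lemma quorum_L:
  assumes "A \<subseteq> {1..n}" "L \<subseteq> {1..n}" "n - f \<le> card A" "f + 1 \<le> card L"
  shows "A \<inter> L \<noteq> {}"
  using card_inter_big[OF assms(1,2)] assms(3,4) nf by auto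

lemma cert_unique:
  assumes "GI G GL clk" "CERT G a v" "CERT G b v" shows "a = b"
proof -
  obtain S1 where S1: "S1 \<subseteq> {1..n}" "n - f \<le> card S1" "\<forall>j\<in>S1. j \<notin> F \<longrightarrow> (\<exists>t. (j,a,v,t) \<in> G)"
    using assms(2) unfolding CERT_def by blast
  obtain S2 where S2: "S2 \<subseteq> {1..n}" "n - f \<le> card S2" "\<forall>j\<in>S2. j \<notin> F \<longrightarrow> (\<exists>t. (j,b,v,t) \<in> G)"
    using assms(3) unfolding CERT_def by blast
  obtain j where "j \<in> S1 \<inter> S2" "j \<notin> F" using two_quorums[OF S1(1) S2(1) S1(2) S2(2)] by blast
  then obtain t t' where "(j,a,v,t) \<in> G" "(j,b,v,t') \<in> G" using S1 S2 by blast
  then show ?thesis using GI_uniq[OF assms(1) \<open>j \<notin> F\<close>] by blast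
qed

lemma CERTb_CERT: "CERTb G a v T \<Longrightarrow> CERT G a v"
  unfolding CERTb_def CERT_def by (elim exE conjE) (rule exI, intro conjI, assumption+, blast)

lemma safety:
  assumes gi: "GI G GL clk" and L: "L \<subseteq> {1..n}" "L \<inter> F = {}" "f + 1 \<le> card L"
    and Llock: "\<forall>l\<in>L. (l,a,v) \<in> GL"
  shows "v \<le> u \<Longrightarrow> CERT G c u \<Longrightarrow> c = a"
proof (induction u arbitrary: c rule: less_induct)
  case (less u)
  note IHu = less.IH
  have "L \<noteq> {}" using L(3) by (metis Suc_eq_plus1 card.empty not_less_eq_eq zero_le)
  then obtain l0 where "l0 \<in> L" by auto
  then have l0: "(l0,a,v) \<in> GL" "l0 \<notin> F" using Llock L(2) by auto
  then have certa: "CERT G a v" and v1: "1 \<le> v" using GI_GL[OF gi] by blast+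
  show ?case
  proof (cases "u = v")
    case True
    then have "CERT G c v" using less.prems(2) by simp
    then show ?thesis using cert_unique[OF gi _ certa] by blast
  next
    case False
    then have uv: "v < u" using less.prems by auto
    have key: "\<forall>l b. l \<in> L \<longrightarrow> (l,b,u,t) \<in> G \<longrightarrow> b = a" for t
    proof (induction t rule: less_induct)
      case (less t)
      show ?case
      proof (intro allI impI)
        fix l b assume lL: "l \<in> L" and ev: "(l,b,u,t) \<in> G"
        have lF: "l \<notin> F" using lL L(2) by auto
        have "EJ G GL l b u t" using GI_EJ[OF gi ev lF] .
        then obtain w0 c0 where w0: "0 \<le> w0" "w0 \<le> int u" "1 \<le> w0 \<longrightarrow> CERTb G c0 (nat w0) t"
          "\<forall>a v. (l,a,v) \<in> GL \<longrightarrow> v < u \<longrightarrow> int v \<le> w0"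
          "w0 = 0 \<or> b = c0 \<or> (\<exists>k w pk. pk < k \<and> k < int u \<and> GP G k w pk \<and> (w0 \<le> pk \<or> (w0 \<le> k \<and> w \<noteq> c0)))"
          unfolding EJ_def by blast
        have vw: "int v \<le> w0" using w0(4) Llock lL uv by blast
        then have w1: "1 \<le> w0" using v1 by linarith
        then have cb: "CERTb G c0 (nat w0) t" using w0(3) by blast
        have c0a: "c0 = a"
        proof (cases "nat w0 < u")
          case True
          moreover have "v \<le> nat w0" using vw by auto
          ultimately show ?thesis using IHu CERTb_CERT[OF cb] by blast
        next
          case False
          then have "nat w0 = u" using w0(2) by auto
          then obtain S where S: "S \<subseteq> {1..n}" "n - f \<le> card S" "\<forall>j\<in>S. j \<notin> F \<longrightarrow> (\<exists>t'<t. (j,c0,u,t') \<in> G)"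
            using cb unfolding CERTb_def by auto
          obtain l' where "l' \<in> S \<inter> L" using quorum_L[OF S(1) L(1) S(2) L(3)] by blast
          moreover then have "l' \<notin> F" using L(2) by auto
          ultimately obtain t' where "t' < t" "(l',c0,u,t') \<in> G" using S(3) by blast
          then show ?thesis using less.IH \<open>l' \<in> S \<inter> L\<close> by blast
        qed
        have certk: "w = a" if "CERT G w (nat k')" "int v \<le> k'" "k' < int u" for w and k' :: int
        proof -
          have "nat k' < u" "v \<le> nat k'" using that(2,3) by auto
          then show ?thesis using IHu that(1) by blast
        qed
        show "b = a"
          using w0(5)
        proof (elim disjE)
          assume "w0 = 0" then show ?thesis using w1 by auto
        next
          assume "b = c0" then show ?thesis using c0a by auto
        next
          assume "\<exists>k w pk. pk < k \<and> k < int u \<and> GP G k w pk \<and> (w0 \<le> pk \<or> (w0 \<le> k \<and> w \<noteq> c0))"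
          then obtain k w pk where kk: "pk < k" "k < int u" "GP G k w pk" "w0 \<le> pk \<or> (w0 \<le> k \<and> w \<noteq> c0)" by blast
          show ?thesis using kk(4)
          proof
            assume "w0 \<le> pk"
            then have "1 \<le> pk" "1 \<le> k" using w1 kk(1) by auto
            then obtain b' where "b' \<noteq> w" "CERT G b' (nat pk)" "CERT G w (nat k)" using kk(3) unfolding GP_def by blast
            have "int v \<le> pk" "int v \<le> k" "pk < int u" using vw \<open>w0 \<le> pk\<close> kk(1,2) by auto
            then have "b' = a" "w = a" using certk \<open>CERT G b' (nat pk)\<close> \<open>CERT G w (nat k)\<close> kk(2) by blast+
            then show ?thesis using \<open>b' \<noteq> w\<close> by auto
          next
            assume "w0 \<le> k \<and> w \<noteq> c0"
            then have "1 \<le> k" "CERT G w (nat k)" using w1 kk(3) unfolding GP_def by auto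
            moreover have "int v \<le> k" using vw \<open>w0 \<le> k \<and> w \<noteq> c0\<close> by auto
            ultimately have "w = a" using certk kk(2) by blast
            then show ?thesis using \<open>w0 \<le> k \<and> w \<noteq> c0\<close> c0a by auto
          qed
        qed
      qed
    qed
    obtain S where S: "S \<subseteq> {1..n}" "n - f \<le> card S" "\<forall>j\<in>S. j \<notin> F \<longrightarrow> (\<exists>t. (j,c,u,t) \<in> G)"
      using less.prems(2) unfolding CERT_def by blast
    obtain l where "l \<in> S \<inter> L" using quorum_L[OF S(1) L(1) S(2) L(3)] by blast
    moreover then have "l \<notin> F" using L(2) by auto
    ultimately obtain t where "(l,c,u,t) \<in> G" using S(3) by blast
    then show ?thesis using key \<open>l \<in> S \<inter> L\<close> by blast
  qed
qed


definition msg_ok :: "(nat \<times> 'v \<times> nat \<times> nat) set \<Rightarrow> (nat \<times> 'v \<times> nat) set \<Rightarrow> nat \<Rightarrow> 'v msg \<Rightarrow> bool" where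
  "msg_ok G GL j m = (case m of
      MEcho a v \<Rightarrow> (\<exists>t. (j,a,v,t) \<in> G)
    | MKey1 a v \<Rightarrow> CERT G a v
    | MKey2 a v \<Rightarrow> CERT G a v
    | MKey3 a v \<Rightarrow> CERT G a v
    | MLock a v \<Rightarrow> (j,a,v) \<in> GL
    | MProof k w pk v \<Rightarrow> GP G k w pk
    | _ \<Rightarrow> True)"

definition LI :: "nat \<Rightarrow> 'v lst \<Rightarrow> (nat \<times> 'v \<times> nat \<times> nat) set \<Rightarrow> (nat \<times> 'v \<times> nat) set \<Rightarrow> bool" where
  "LI p st G GL \<longleftrightarrow>
    1 \<le> view st \<and>
    (\<forall>a. echo_from st a \<subseteq> {1..n} \<and> (\<forall>j\<in>echo_from st a. j \<notin> F \<longrightarrow> (\<exists>t. (j,a,view st,t) \<in> G))) \<and>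
    (\<forall>a j. j \<in> key1_from st a \<longrightarrow> j \<notin> F \<longrightarrow> CERT G a (view st)) \<and>
    (\<forall>a j. j \<in> key2_from st a \<longrightarrow> j \<notin> F \<longrightarrow> CERT G a (view st)) \<and>
    (\<forall>a j. j \<in> key3_from st a \<longrightarrow> j \<notin> F \<longrightarrow> CERT G a (view st)) \<and>
    (\<forall>a. lock_from st a \<subseteq> {1..n} \<and> (\<forall>j\<in>lock_from st a. j \<notin> F \<longrightarrow> (j,a,view st) \<in> GL)) \<and>
    (\<forall>m\<in>pending st. msg_ok G GL p m) \<and>
    (\<forall>j k w pk. proofs st j = Some (k,w,pk) \<longrightarrow> pk < k \<and> k < int (view st) \<and> (j \<notin> F \<longrightarrow> GP G k w pk)) \<and>
    (0 \<le> key1 st \<and> key1 st \<le> int (view st) \<and> prev_key1 st < key1 st \<and> GP G (key1 st) (key1_val st) (prev_key1 st)) \<and>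
    (0 \<le> lock st \<and> lock st \<le> int (view st) \<and> (1 \<le> lock st \<longrightarrow> CERT G (lock_val st) (nat (lock st)))) \<and>
    (\<forall>a v. (p,a,v) \<in> GL \<longrightarrow> int v \<le> lock st \<and> v \<le> view st) \<and>
    (\<forall>a u t. (p,a,u,t) \<in> G \<longrightarrow> u \<le> view st) \<and>
    (\<not> propose_recv st \<longrightarrow> (\<forall>a t. (p,a,view st,t) \<notin> G)) \<and>
    (echo_wait st \<noteq> None \<longrightarrow> propose_recv st \<and> (\<forall>a t. (p,a,view st,t) \<notin> G)) \<and>
    (\<forall>a. done_by_lock st = Some a \<longrightarrow> (\<exists>v. LQ GL a v))"

definition NI :: "(nat \<times> 'v \<times> nat \<times> nat) set \<Rightarrow> (nat \<times> 'v \<times> nat) set \<Rightarrow> (nat \<times> nat \<times> 'v msg) multiset \<Rightarrow> bool" where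
  "NI G GL N \<longleftrightarrow> (\<forall>j k m. (j,k,m) \<in># N \<longrightarrow> j \<in> {1..n} \<and> (j \<notin> F \<longrightarrow> msg_ok G GL j m))"

definition INV :: "'v gst \<Rightarrow> (nat \<times> 'v \<times> nat \<times> nat) set \<Rightarrow> (nat \<times> 'v \<times> nat) set \<Rightarrow> nat \<Rightarrow> bool" where
  "INV s G GL clk \<longleftrightarrow> GI G GL clk \<and> NI G GL (net s) \<and> (\<forall>p. p \<in> {1..n} \<longrightarrow> p \<notin> F \<longrightarrow> LI p (loc s p) G GL)"

lemma CERT_mono: "CERT G a v \<Longrightarrow> G \<subseteq> G' \<Longrightarrow> CERT G' a v"
  unfolding CERT_def by (elim exE conjE) (rule exI, intro conjI, assumption+, blast)
lemma CERTb_mono: "CERTb G a v T \<Longrightarrow> G \<subseteq> G' \<Longrightarrow> CERTb G' a v T"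
  unfolding CERTb_def by (elim exE conjE) (rule exI, intro conjI, assumption+, blast)
lemma GP_mono: "GP G k w pk \<Longrightarrow> G \<subseteq> G' \<Longrightarrow> GP G' k w pk"
  unfolding GP_def using CERT_mono by meson
lemma LQ_mono: "LQ GL a v \<Longrightarrow> GL \<subseteq> GL' \<Longrightarrow> LQ GL' a v"
  unfolding LQ_def by (elim exE conjE) (rule exI, intro conjI, assumption+, blast)
lemma msg_ok_mono: "msg_ok G GL j m \<Longrightarrow> G \<subseteq> G' \<Longrightarrow> GL \<subseteq> GL' \<Longrightarrow> msg_ok G' GL' j m"
  unfolding msg_ok_def using CERT_mono GP_mono by (cases m) auto

lemma EJ_mono:
  assumes "EJ G GL l b u t" "G \<subseteq> G'" "\<forall>a v. (l,a,v) \<in> GL' \<longrightarrow> (l,a,v) \<notin> GL \<longrightarrow> u \<le> v"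
  shows "EJ G' GL' l b u t"
proof -
  obtain w0 c0 where w0: "0 \<le> w0" "w0 \<le> int u" "1 \<le> w0 \<longrightarrow> CERTb G c0 (nat w0) t"
    "\<forall>a v. (l,a,v) \<in> GL \<longrightarrow> v < u \<longrightarrow> int v \<le> w0"
    "w0 = 0 \<or> b = c0 \<or> (\<exists>k w pk. pk < k \<and> k < int u \<and> GP G k w pk \<and> (w0 \<le> pk \<or> (w0 \<le> k \<and> w \<noteq> c0)))"
    apply (insert assms(1)[unfolded EJ_def])
    apply (elim exE conjE)
    apply (rule that)
        apply assumption+
    done
  have h1: "1 \<le> w0 \<longrightarrow> CERTb G' c0 (nat w0) t" using w0(3) CERTb_mono[OF _ assms(2)] by blast
  have h2: "\<forall>a v. (l,a,v) \<in> GL' \<longrightarrow> v < u \<longrightarrow> int v \<le> w0"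
  proof (intro allI impI)
    fix a v assume "(l,a,v) \<in> GL'" "v < u"
    then have "(l,a,v) \<in> GL" using assms(3) by (meson not_less)
    then show "int v \<le> w0" using w0(4) \<open>v < u\<close> by blast
  qed
  have h3: "w0 = 0 \<or> b = c0 \<or> (\<exists>k w pk. pk < k \<and> k < int u \<and> GP G' k w pk \<and> (w0 \<le> pk \<or> (w0 \<le> k \<and> w \<noteq> c0)))"
    using w0(5) GP_mono[OF _ assms(2)] by blast
  show ?thesis unfolding EJ_def
    by (rule exI[of _ w0], rule exI[of _ c0], rule conjI[OF w0(1) conjI[OF w0(2) conjI[OF h1 conjI[OF h2 h3]]]])
qed

lemma LI_mono:
  assumes "LI p st G GL" "G \<subseteq> G'" "GL \<subseteq> GL'"
    "\<forall>e\<in>G' - G. fst e \<noteq> p" "\<forall>e\<in>GL' - GL. fst e \<noteq> p"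
  shows "LI p st G' GL'"
proof -
  have a: "\<forall>a v. (p,a,v) \<in> GL' \<longrightarrow> (p,a,v) \<in> GL" using assms(5) by force
  have b: "\<forall>a u t. (p,a,u,t) \<in> G' \<longrightarrow> (p,a,u,t) \<in> G" using assms(4) by force
  note h = assms(1)[unfolded LI_def]
  have c1: "\<forall>a. echo_from st a \<subseteq> {1..n} \<and> (\<forall>j\<in>echo_from st a. j \<notin> F \<longrightarrow> (\<exists>t. (j,a,view st,t) \<in> G'))"
    using h assms(2) by (meson subsetD)
  have c2: "\<forall>a j. j \<in> key1_from st a \<longrightarrow> j \<notin> F \<longrightarrow> CERT G' a (view st)"
    using h CERT_mono[OF _ assms(2)] by meson
  have c3: "\<forall>a j. j \<in> key2_from st a \<longrightarrow> j \<notin> F \<longrightarrow> CERT G' a (view st)"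
    using h CERT_mono[OF _ assms(2)] by meson
  have c4: "\<forall>a j. j \<in> key3_from st a \<longrightarrow> j \<notin> F \<longrightarrow> CERT G' a (view st)"
    using h CERT_mono[OF _ assms(2)] by meson
  have c5: "\<forall>a. lock_from st a \<subseteq> {1..n} \<and> (\<forall>j\<in>lock_from st a. j \<notin> F \<longrightarrow> (j,a,view st) \<in> GL')"
    using h assms(3) by (meson subsetD)
  have c6: "\<forall>m\<in>pending st. msg_ok G' GL' p m"
  proof
    fix m assume "m \<in> pending st"
    then have "msg_ok G GL p m" using h by meson
    then show "msg_ok G' GL' p m" using msg_ok_mono assms(2,3) by blast
  qed
  have c7: "\<forall>j k w pk. proofs st j = Some (k,w,pk) \<longrightarrow> pk < k \<and> k < int (view st) \<and> (j \<notin> F \<longrightarrow> GP G' k w pk)"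
    using h GP_mono[OF _ assms(2)] by meson
  have c8: "0 \<le> key1 st \<and> key1 st \<le> int (view st) \<and> prev_key1 st < key1 st \<and> GP G' (key1 st) (key1_val st) (prev_key1 st)"
    using h GP_mono[OF _ assms(2)] by meson
  have c9: "0 \<le> lock st \<and> lock st \<le> int (view st) \<and> (1 \<le> lock st \<longrightarrow> CERT G' (lock_val st) (nat (lock st)))"
    using h CERT_mono[OF _ assms(2)] by meson
  have c10: "\<forall>a v. (p,a,v) \<in> GL' \<longrightarrow> int v \<le> lock st \<and> v \<le> view st" using h a by meson
  have c11: "\<forall>a u t. (p,a,u,t) \<in> G' \<longrightarrow> u \<le> view st" using h b by meson
  have c12: "\<not> propose_recv st \<longrightarrow> (\<forall>a t. (p,a,view st,t) \<notin> G')" using h b by meson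
  have c13: "echo_wait st \<noteq> None \<longrightarrow> propose_recv st \<and> (\<forall>a t. (p,a,view st,t) \<notin> G')" using h b by meson
  have c14: "\<forall>a. done_by_lock st = Some a \<longrightarrow> (\<exists>v. LQ GL' a v)" using h LQ_mono[OF _ assms(3)] by meson
  have c0: "1 \<le> view st" using h by meson
  show ?thesis unfolding LI_def by (rule conjI[OF c0 conjI[OF c1 conjI[OF c2 conjI[OF c3 conjI[OF c4 conjI[OF c5 conjI[OF c6 conjI[OF c7 conjI[OF c8 conjI[OF c9 conjI[OF c10 conjI[OF c11 conjI[OF c12 conjI[OF c13 c14]]]]]]]]]]]]]])
qed

lemma GI_CERTb:
  assumes "GI G GL clk" "CERT G a v" shows "CERTb G a v clk"
proof -
  obtain S where S: "S \<subseteq> {1..n}" "n - f \<le> card S" "\<forall>j\<in>S. j \<notin> F \<longrightarrow> (\<exists>t. (j,a,v,t) \<in> G)"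
    using assms(2) unfolding CERT_def by blast
  have "\<forall>j\<in>S. j \<notin> F \<longrightarrow> (\<exists>t<clk. (j,a,v,t) \<in> G)" using S(3) GI_clk[OF assms(1)] by meson
  then show ?thesis unfolding CERTb_def using S(1,2) by blast
qed


lemma LI_frame:
  assumes "LI p st G GL" "view st' = view st" "echo_from st' = echo_from st" "key1_from st' = key1_from st"
    "key2_from st' = key2_from st" "key3_from st' = key3_from st" "lock_from st' = lock_from st"
    "pending st' = pending st" "proofs st' = proofs st" "key1 st' = key1 st" "key1_val st' = key1_val st"
    "prev_key1 st' = prev_key1 st" "lock st' = lock st" "lock_val st' = lock_val st"
    "propose_recv st' = propose_recv st" "echo_wait st' = echo_wait st" "done_by_lock st' = done_by_lock st"
  shows "LI p st' G GL"
  using assms(1) unfolding LI_def assms(2-17) .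

lemma LI_enter:
  assumes "LI p st G GL" "view st < v'"
  shows "LI p (fst (enter_view n v' st)) G GL"
proof -
  note h = assms(1)[unfolded LI_def]
  have gp: "GP G (key1 st) (key1_val st) (prev_key1 st)" using h by meson
  have k: "0 \<le> key1 st \<and> key1 st \<le> int (view st) \<and> prev_key1 st < key1 st" using h by meson
  have l: "0 \<le> lock st \<and> lock st \<le> int (view st) \<and> (1 \<le> lock st \<longrightarrow> CERT G (lock_val st) (nat (lock st)))" using h by meson
  have gl: "\<forall>a v. (p,a,v) \<in> GL \<longrightarrow> int v \<le> lock st \<and> v \<le> view st" using h by meson
  have ge: "\<forall>a u t. (p,a,u,t) \<in> G \<longrightarrow> u \<le> view st" using h by meson
  have dl: "\<forall>a. done_by_lock st = Some a \<longrightarrow> (\<exists>v. LQ GL a v)" using h by meson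
  have v1: "1 \<le> view st" using h by meson
  have ge': "\<forall>a t. (p,a,v',t) \<notin> G" using ge assms(2) by fastforce
  have gl2: "\<forall>a v. (p,a,v) \<in> GL \<longrightarrow> v \<le> v'" using gl assms(2) by fastforce
  have ge2: "\<forall>a u t. (p,a,u,t) \<in> G \<longrightarrow> u \<le> v'" using ge assms(2) by fastforce
  show ?thesis unfolding LI_def enter_view_def fst_conv
    using gp k l gl ge dl v1 ge' gl2 ge2 assms(2) by (simp add: msg_ok_def)
qed

lemma GI_echo:
  assumes gi: "GI G GL clk" and li: "LI i st G GL" and iF: "i \<notin> F"
    and noev: "\<forall>a t. (i,a,view st,t) \<notin> G"
    and cond: "lock st = 0 \<or> b = lock_val st \<or> (\<exists>k w pk. pk < k \<and> k < int (view st) \<and> GP G k w pk \<and>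
                  (lock st \<le> pk \<or> (lock st \<le> k \<and> w \<noteq> lock_val st)))"
  shows "GI (insert (i,b,view st,clk) G) GL (Suc clk)"
proof -
  define G' where "G' = insert (i,b,view st,clk) G"
  note h = li[unfolded LI_def]
  have l: "0 \<le> lock st \<and> lock st \<le> int (view st) \<and> (1 \<le> lock st \<longrightarrow> CERT G (lock_val st) (nat (lock st)))" using h by meson
  have gl: "\<forall>a v. (i,a,v) \<in> GL \<longrightarrow> int v \<le> lock st \<and> v \<le> view st" using h by meson
  have cb: "1 \<le> lock st \<longrightarrow> CERTb G (lock_val st) (nat (lock st)) clk" using l GI_CERTb[OF gi] by blast
  have gl2: "\<forall>a v. (i,a,v) \<in> GL \<longrightarrow> v < view st \<longrightarrow> int v \<le> lock st" using gl by blast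
  have ej0: "EJ G GL i b (view st) clk" unfolding EJ_def
    by (rule exI[of _ "lock st"], rule exI[of _ "lock_val st"], intro conjI, use l in blast, use l in blast,
        rule cb, rule gl2, rule cond)
  have sub: "G \<subseteq> G'" unfolding G'_def by blast
  have ej: "EJ G' GL i b (view st) clk" using EJ_mono[OF ej0 sub] by blast
  have g1: "\<forall>p a b u t t'. p \<notin> F \<longrightarrow> (p,a,u,t) \<in> G' \<longrightarrow> (p,b,u,t') \<in> G' \<longrightarrow> a = b"
  proof (intro allI impI)
    fix p a b' u t t' assume "p \<notin> F" "(p,a,u,t) \<in> G'" "(p,b',u,t') \<in> G'"
    then show "a = b'" unfolding G'_def using noev GI_uniq[OF gi] by blast
  qed
  have g2: "\<forall>p b u t. (p,b,u,t) \<in> G' \<longrightarrow> p \<notin> F \<longrightarrow> EJ G' GL p b u t"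
  proof (intro allI impI)
    fix p b' u t assume a: "(p,b',u,t) \<in> G'" "p \<notin> F"
    show "EJ G' GL p b' u t"
    proof (cases "(p,b',u,t) \<in> G")
      case True
      then show ?thesis using EJ_mono[OF GI_EJ[OF gi True a(2)] sub] by blast
    next
      case False
      then have "(p,b',u,t) = (i,b,view st,clk)" using a(1) unfolding G'_def by blast
      then show ?thesis using ej by simp
    qed
  qed
  have g3: "\<forall>p a v. (p,a,v) \<in> GL \<longrightarrow> p \<notin> F \<longrightarrow> CERT G' a v \<and> 1 \<le> v"
    using GI_GL[OF gi] CERT_mono[OF _ sub] by blast
  have g4: "\<forall>p b u t. (p,b,u,t) \<in> G' \<longrightarrow> t < Suc clk"
    unfolding G'_def using GI_clk[OF gi] less_Suc_eq by blast
  show ?thesis unfolding GI_def G'_def[symmetric] by (rule conjI[OF g1 conjI[OF g2 conjI[OF g3 g4]]])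
qed

lemma GI_lock:
  assumes gi: "GI G GL clk" and li: "LI i st G GL" and iF: "i \<notin> F"
    and cert: "CERT G a (view st)"
  shows "GI G (insert (i,a,view st) GL) clk"
proof -
  define GL' where "GL' = insert (i,a,view st) GL"
  note h = li[unfolded LI_def]
  have ge: "\<forall>a u t. (i,a,u,t) \<in> G \<longrightarrow> u \<le> view st" using h by meson
  have v1: "1 \<le> view st" using h by meson
  have g1: "\<forall>p a b u t t'. p \<notin> F \<longrightarrow> (p,a,u,t) \<in> G \<longrightarrow> (p,b,u,t') \<in> G \<longrightarrow> a = b"
    using GI_uniq[OF gi] by blast
  have g2: "\<forall>p b u t. (p,b,u,t) \<in> G \<longrightarrow> p \<notin> F \<longrightarrow> EJ G GL' p b u t"
  proof (intro allI impI)
    fix p b u t assume a: "(p,b,u,t) \<in> G" "p \<notin> F"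
    have "\<forall>a' v. (p,a',v) \<in> GL' \<longrightarrow> (p,a',v) \<notin> GL \<longrightarrow> u \<le> v"
    proof (intro allI impI)
      fix a' v assume "(p,a',v) \<in> GL'" "(p,a',v) \<notin> GL"
      then have "p = i" "v = view st" unfolding GL'_def by auto
      then show "u \<le> v" using ge a(1) by blast
    qed
    then show "EJ G GL' p b u t" using EJ_mono[OF GI_EJ[OF gi a] subset_refl] by blast
  qed
  have g3: "\<forall>p a v. (p,a,v) \<in> GL' \<longrightarrow> p \<notin> F \<longrightarrow> CERT G a v \<and> 1 \<le> v"
    unfolding GL'_def using GI_GL[OF gi] cert v1 by blast
  have g4: "\<forall>p b u t. (p,b,u,t) \<in> G \<longrightarrow> t < clk" using GI_clk[OF gi] by blast
  show ?thesis unfolding GI_def GL'_def[symmetric] by (rule conjI[OF g1 conjI[OF g2 conjI[OF g3 g4]]])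
qed

definition OK_step :: "nat \<Rightarrow> 'v lst \<Rightarrow> (nat \<times> 'v msg) list \<Rightarrow> (nat \<times> 'v \<times> nat \<times> nat) set \<Rightarrow> (nat \<times> 'v \<times> nat) set \<Rightarrow> nat \<Rightarrow> bool" where
  "OK_step i st' outs G GL clk \<longleftrightarrow> (\<exists>G' GL' clk'. G \<subseteq> G' \<and> GL \<subseteq> GL' \<and> (\<forall>e\<in>G' - G. fst e = i) \<and>
     (\<forall>e\<in>GL' - GL. fst e = i) \<and> LI i st' G' GL' \<and> GI G' GL' clk' \<and> (\<forall>km\<in>set outs. msg_ok G' GL' i (snd km)))"

lemma OK_noghost: "LI i st' G GL \<Longrightarrow> GI G GL clk \<Longrightarrow> \<forall>km\<in>set outs. msg_ok G GL i (snd km) \<Longrightarrow> OK_step i st' outs G GL clk"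
  unfolding OK_step_def by blast

lemma OK_echo: "LI i st' (insert (i,b,u,clk) G) GL \<Longrightarrow> GI (insert (i,b,u,clk) G) GL (Suc clk) \<Longrightarrow>
   OK_step i st' [] G GL clk"
  unfolding OK_step_def by (rule exI[of _ "insert (i,b,u,clk) G"], rule exI[of _ GL], rule exI[of _ "Suc clk"]) auto

lemma OK_lock: "LI i st' G (insert (i,a,u) GL) \<Longrightarrow> GI G (insert (i,a,u) GL) clk \<Longrightarrow>
   OK_step i st' [] G GL clk"
  unfolding OK_step_def by (rule exI[of _ G], rule exI[of _ "insert (i,a,u) GL"], rule exI[of _ clk]) auto

lemma msg_ok_to_all: "(\<forall>km\<in>set (to_all n' m). msg_ok G GL i (snd km)) \<longleftrightarrow> (n' = 0 \<or> msg_ok G GL i m)"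
  unfolding to_all_def by auto
lemma LI_proof_upd:
  assumes li: "LI i st G GL" and eq: "s' = st\<lparr>proof_from := insert j (proof_from st), proofs := (proofs st)(j := Some (k1, v1, pk1))\<rparr>"
    and vv: "v = view st"
    and kk: "int v > k1 \<and> k1 > pk1"
    and gp: "j \<notin> F \<longrightarrow> GP G k1 v1 pk1"
  shows "LI i s' G GL"
proof -
  note h = li[unfolded LI_def]

  have c0: "1 \<le> view s'"
    using h by (simp add: eq)
  have c1: "\<forall>a. echo_from s' a \<subseteq> {1..n} \<and> (\<forall>j\<in>echo_from s' a. j \<notin> F \<longrightarrow> (\<exists>t. (j,a,view s',t) \<in> G))"
    using h by (simp add: eq)
  have c2: "\<forall>a j. j \<in> key1_from s' a \<longrightarrow> j \<notin> F \<longrightarrow> CERT G a (view s')"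
    using h by (simp add: eq)
  have c3: "\<forall>a j. j \<in> key2_from s' a \<longrightarrow> j \<notin> F \<longrightarrow> CERT G a (view s')"
    using h by (simp add: eq)
  have c4: "\<forall>a j. j \<in> key3_from s' a \<longrightarrow> j \<notin> F \<longrightarrow> CERT G a (view s')"
    using h by (simp add: eq)
  have c5: "\<forall>a. lock_from s' a \<subseteq> {1..n} \<and> (\<forall>j\<in>lock_from s' a. j \<notin> F \<longrightarrow> (j,a,view s') \<in> GL)"
    using h by (simp add: eq)
  have c6: "\<forall>m\<in>pending s'. msg_ok G GL i m"
    using h by (simp add: eq)
  have c7: "\<forall>j k w pk. proofs s' j = Some (k,w,pk) \<longrightarrow> pk < k \<and> k < int (view s') \<and> (j \<notin> F \<longrightarrow> GP G k w pk)"
    using h vv kk gp by (simp add: eq)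
  have c8: "0 \<le> key1 s' \<and> key1 s' \<le> int (view s') \<and> prev_key1 s' < key1 s' \<and> GP G (key1 s') (key1_val s') (prev_key1 s')"
    using h by (simp add: eq)
  have c9: "0 \<le> lock s' \<and> lock s' \<le> int (view s') \<and> (1 \<le> lock s' \<longrightarrow> CERT G (lock_val s') (nat (lock s')))"
    using h by (simp add: eq)
  have c10: "\<forall>a vb. (i,a,vb) \<in> GL \<longrightarrow> int vb \<le> lock s' \<and> vb \<le> view s'"
    using h by (simp add: eq)
  have c11: "\<forall>a u t. (i,a,u,t) \<in> G \<longrightarrow> u \<le> view s'"
    using h by (simp add: eq)
  have c12: "\<not> propose_recv s' \<longrightarrow> (\<forall>a t. (i,a,view s',t) \<notin> G)"
    using h by (simp add: eq)
  have c13: "echo_wait s' \<noteq> None \<longrightarrow> propose_recv s' \<and> (\<forall>a t. (i,a,view s',t) \<notin> G)"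
    using h by (simp add: eq)
  have c14: "\<forall>a. done_by_lock s' = Some a \<longrightarrow> (\<exists>vq. LQ GL a vq)"
    using h by (simp add: eq)
  show ?thesis unfolding LI_def by (rule conjI[OF c0 conjI[OF c1 conjI[OF c2 conjI[OF c3 conjI[OF c4 conjI[OF c5 conjI[OF c6 conjI[OF c7 conjI[OF c8 conjI[OF c9 conjI[OF c10 conjI[OF c11 conjI[OF c12 conjI[OF c13 c14]]]]]]]]]]]]]])
qed


lemma LI_recv_proof:
  assumes li: "LI i st G GL" and gp: "j \<notin> F \<longrightarrow> GP G k1 v1 pk1"
  shows "LI i (recv_proof j k1 v1 pk1 v st) G GL"
proof (cases "v = view st \<and> j \<notin> proof_from st")
  case False
  then show ?thesis using li by (simp only: recv_proof_def if_not_P[OF False] if_False)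
next
  case True
  show ?thesis
  proof (cases "int v > k1 \<and> k1 > pk1")
    case True2: True
    have "recv_proof j k1 v1 pk1 v st = st\<lparr>proof_from := insert j (proof_from st), proofs := (proofs st)(j := Some (k1, v1, pk1))\<rparr>"
      using True True2 by (simp add: recv_proof_def Let_def)
    then show ?thesis using LI_proof_upd[OF li _ _ True2 gp] True by blast
  next
    case False
    have "recv_proof j k1 v1 pk1 v st = st\<lparr>proof_from := insert j (proof_from st)\<rparr>"
      using True False by (auto simp add: recv_proof_def Let_def)
    then show ?thesis using LI_frame[OF li] by simp
  qed
qed

lemma LI_monoA:
  assumes "LI p st G GL" "G \<subseteq> G'" "GL \<subseteq> GL'"
  shows "1 \<le> view st"
    "\<forall>a. echo_from st a \<subseteq> {1..n} \<and> (\<forall>j\<in>echo_from st a. j \<notin> F \<longrightarrow> (\<exists>t. (j,a,view st,t) \<in> G'))"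
    "\<forall>a j. j \<in> key1_from st a \<longrightarrow> j \<notin> F \<longrightarrow> CERT G' a (view st)"
    "\<forall>a j. j \<in> key2_from st a \<longrightarrow> j \<notin> F \<longrightarrow> CERT G' a (view st)"
    "\<forall>a j. j \<in> key3_from st a \<longrightarrow> j \<notin> F \<longrightarrow> CERT G' a (view st)"
    "\<forall>a. lock_from st a \<subseteq> {1..n} \<and> (\<forall>j\<in>lock_from st a. j \<notin> F \<longrightarrow> (j,a,view st) \<in> GL')"
    "\<forall>m\<in>pending st. msg_ok G' GL' p m"
    "\<forall>j k w pk. proofs st j = Some (k,w,pk) \<longrightarrow> pk < k \<and> k < int (view st) \<and> (j \<notin> F \<longrightarrow> GP G' k w pk)"
    "0 \<le> key1 st \<and> key1 st \<le> int (view st) \<and> prev_key1 st < key1 st \<and> GP G' (key1 st) (key1_val st) (prev_key1 st)"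
    "0 \<le> lock st \<and> lock st \<le> int (view st) \<and> (1 \<le> lock st \<longrightarrow> CERT G' (lock_val st) (nat (lock st)))"
    "\<forall>a. done_by_lock st = Some a \<longrightarrow> (\<exists>v. LQ GL' a v)"
proof -
  note h = assms(1)[unfolded LI_def]
  show "\<forall>a. echo_from st a \<subseteq> {1..n} \<and> (\<forall>j\<in>echo_from st a. j \<notin> F \<longrightarrow> (\<exists>t. (j,a,view st,t) \<in> G'))"
    using h assms(2) by (meson subsetD)
  show "\<forall>a j. j \<in> key1_from st a \<longrightarrow> j \<notin> F \<longrightarrow> CERT G' a (view st)"
    using h CERT_mono[OF _ assms(2)] by meson
  show "\<forall>a j. j \<in> key2_from st a \<longrightarrow> j \<notin> F \<longrightarrow> CERT G' a (view st)"
    using h CERT_mono[OF _ assms(2)] by meson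
  show "\<forall>a j. j \<in> key3_from st a \<longrightarrow> j \<notin> F \<longrightarrow> CERT G' a (view st)"
    using h CERT_mono[OF _ assms(2)] by meson
  show "\<forall>a. lock_from st a \<subseteq> {1..n} \<and> (\<forall>j\<in>lock_from st a. j \<notin> F \<longrightarrow> (j,a,view st) \<in> GL')"
    using h assms(3) by (meson subsetD)
  show "\<forall>m\<in>pending st. msg_ok G' GL' p m"
  proof
    fix m assume "m \<in> pending st"
    then have "msg_ok G GL p m" using h by meson
    then show "msg_ok G' GL' p m" using msg_ok_mono assms(2,3) by blast
  qed
  show "\<forall>j k w pk. proofs st j = Some (k,w,pk) \<longrightarrow> pk < k \<and> k < int (view st) \<and> (j \<notin> F \<longrightarrow> GP G' k w pk)"
    using h GP_mono[OF _ assms(2)] by meson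
  show "0 \<le> key1 st \<and> key1 st \<le> int (view st) \<and> prev_key1 st < key1 st \<and> GP G' (key1 st) (key1_val st) (prev_key1 st)"
    using h GP_mono[OF _ assms(2)] by meson
  show "0 \<le> lock st \<and> lock st \<le> int (view st) \<and> (1 \<le> lock st \<longrightarrow> CERT G' (lock_val st) (nat (lock st)))"
    using h CERT_mono[OF _ assms(2)] by meson
  show "\<forall>a. done_by_lock st = Some a \<longrightarrow> (\<exists>v. LQ GL' a v)" using h LQ_mono[OF _ assms(3)] by meson
  show "1 \<le> view st" using h by meson
qed

lemma key1_upd:
  assumes k: "0 \<le> k \<and> k \<le> int v \<and> pk < k \<and> GP G k kv pk" and c: "CERT G val v" and v1: "1 \<le> v"
    and gi: "GI G GL clk"
  shows "0 \<le> int v \<and> int v \<le> int v \<and> (if kv \<noteq> val then k else pk) < int v \<and>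
         GP G (int v) val (if kv \<noteq> val then k else pk)"
proof (cases "kv = val")
  case True
  have "GP G (int v) val pk" using k c True unfolding GP_def by auto
  then show ?thesis using True k by auto
next
  case False
  have kl: "k < int v"
  proof (rule ccontr)
    assume "\<not> k < int v"
    then have "k = int v" using k by auto
    then have "CERT G kv v" using k v1 unfolding GP_def by auto
    then show False using cert_unique[OF gi _ c] False by blast
  qed
  have "1 \<le> k \<longrightarrow> CERT G kv (nat k)" using k unfolding GP_def by blast
  then have "GP G (int v) val k" using c False unfolding GP_def by auto
  then show ?thesis using False k kl by auto
qed

lemma cross_quorum:
  assumes "crosses (n - f) A (insert j A)"
  shows "n - f \<le> card (insert j A)"
  using assms unfolding crosses_def by auto

lemma card_quorum_nonF:
  assumes "n - f \<le> card E" "\<And>j'. j' \<in> E \<Longrightarrow> j' \<notin> F \<Longrightarrow> P"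
  shows "P"
  using quorum_nonF[OF assms(1)] assms(2) by blast

lemma LI_echo_nc:
  assumes li: "LI i st G GL" and eq: "s' = st\<lparr>echo_from := (echo_from st)(val := insert j (echo_from st val))\<rparr>"
    and vv: "v = view st"
    and jn: "j \<in> {1..n}"
    and ev: "j \<notin> F \<longrightarrow> (\<exists>t. (j,val,v,t) \<in> G)"
  shows "LI i s' G GL"
proof -
  note h = li[unfolded LI_def]

  have c0: "1 \<le> view s'"
    using h by (simp add: eq)
  have c1: "\<forall>a. echo_from s' a \<subseteq> {1..n} \<and> (\<forall>j\<in>echo_from s' a. j \<notin> F \<longrightarrow> (\<exists>t. (j,a,view s',t) \<in> G))"
    using h vv jn ev by (auto simp add: eq)
  have c2: "\<forall>a j. j \<in> key1_from s' a \<longrightarrow> j \<notin> F \<longrightarrow> CERT G a (view s')"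
    using h by (simp add: eq)
  have c3: "\<forall>a j. j \<in> key2_from s' a \<longrightarrow> j \<notin> F \<longrightarrow> CERT G a (view s')"
    using h by (simp add: eq)
  have c4: "\<forall>a j. j \<in> key3_from s' a \<longrightarrow> j \<notin> F \<longrightarrow> CERT G a (view s')"
    using h by (simp add: eq)
  have c5: "\<forall>a. lock_from s' a \<subseteq> {1..n} \<and> (\<forall>j\<in>lock_from s' a. j \<notin> F \<longrightarrow> (j,a,view s') \<in> GL)"
    using h by (simp add: eq)
  have c6: "\<forall>m\<in>pending s'. msg_ok G GL i m"
    using h by (simp add: eq)
  have c7: "\<forall>j k w pk. proofs s' j = Some (k,w,pk) \<longrightarrow> pk < k \<and> k < int (view s') \<and> (j \<notin> F \<longrightarrow> GP G k w pk)"
    using h by (simp add: eq)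
  have c8: "0 \<le> key1 s' \<and> key1 s' \<le> int (view s') \<and> prev_key1 s' < key1 s' \<and> GP G (key1 s') (key1_val s') (prev_key1 s')"
    using h by (simp add: eq)
  have c9: "0 \<le> lock s' \<and> lock s' \<le> int (view s') \<and> (1 \<le> lock s' \<longrightarrow> CERT G (lock_val s') (nat (lock s')))"
    using h by (simp add: eq)
  have c10: "\<forall>a vb. (i,a,vb) \<in> GL \<longrightarrow> int vb \<le> lock s' \<and> vb \<le> view s'"
    using h by (simp add: eq)
  have c11: "\<forall>a u t. (i,a,u,t) \<in> G \<longrightarrow> u \<le> view s'"
    using h by (simp add: eq)
  have c12: "\<not> propose_recv s' \<longrightarrow> (\<forall>a t. (i,a,view s',t) \<notin> G)"
    using h by (simp add: eq)
  have c13: "echo_wait s' \<noteq> None \<longrightarrow> propose_recv s' \<and> (\<forall>a t. (i,a,view s',t) \<notin> G)"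
    using h by (simp add: eq)
  have c14: "\<forall>a. done_by_lock s' = Some a \<longrightarrow> (\<exists>vq. LQ GL a vq)"
    using h by (simp add: eq)
  show ?thesis unfolding LI_def by (rule conjI[OF c0 conjI[OF c1 conjI[OF c2 conjI[OF c3 conjI[OF c4 conjI[OF c5 conjI[OF c6 conjI[OF c7 conjI[OF c8 conjI[OF c9 conjI[OF c10 conjI[OF c11 conjI[OF c12 conjI[OF c13 c14]]]]]]]]]]]]]])
qed

lemma LI_echo_c:
  assumes li: "LI i st G GL" and eq: "s' = st\<lparr>echo_from := (echo_from st)(val := insert j (echo_from st val)), pending := insert (MKey1 val v) (pending st), prev_key1 := (if key1_val st \<noteq> val then key1 st else prev_key1 st), key1_val := val, key1 := int v\<rparr>"
    and vv: "v = view st"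
    and jn: "j \<in> {1..n}"
    and ev: "j \<notin> F \<longrightarrow> (\<exists>t. (j,val,v,t) \<in> G)"
    and cr: "n - f \<le> card (insert j (echo_from st val))"
    and gi: "GI G GL clk"
  shows "LI i s' G GL"
proof -
  note h = li[unfolded LI_def]
  have E: "CERT G val v" unfolding CERT_def
  proof (intro exI[of _ "insert j (echo_from st val)"] conjI)
    show "insert j (echo_from st val) \<subseteq> {1..n}" using h jn by simp
    show "n - f \<le> card (insert j (echo_from st val))" using cr .
    show "\<forall>j'\<in>insert j (echo_from st val). j' \<notin> F \<longrightarrow> (\<exists>t. (j',val,v,t) \<in> G)" using h ev vv by auto
  qed
  have k1: "0 \<le> key1 st \<and> key1 st \<le> int (view st) \<and> prev_key1 st < key1 st \<and> GP G (key1 st) (key1_val st) (prev_key1 st)" using h by meson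
  have v1: "1 \<le> view st" using h by meson
  have ku: "0 \<le> int v \<and> int v \<le> int v \<and> (if key1_val st \<noteq> val then key1 st else prev_key1 st) < int v \<and>
         GP G (int v) val (if key1_val st \<noteq> val then key1 st else prev_key1 st)"
    using key1_upd[OF _ E _ gi] k1 v1 vv by simp
  have c0: "1 \<le> view s'"
    using h by (simp add: eq)
  have c1: "\<forall>a. echo_from s' a \<subseteq> {1..n} \<and> (\<forall>j\<in>echo_from s' a. j \<notin> F \<longrightarrow> (\<exists>t. (j,a,view s',t) \<in> G))"
    using h vv jn ev by (auto simp add: eq)
  have c2: "\<forall>a j. j \<in> key1_from s' a \<longrightarrow> j \<notin> F \<longrightarrow> CERT G a (view s')"
    using h by (simp add: eq)
  have c3: "\<forall>a j. j \<in> key2_from s' a \<longrightarrow> j \<notin> F \<longrightarrow> CERT G a (view s')"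
    using h by (simp add: eq)
  have c4: "\<forall>a j. j \<in> key3_from s' a \<longrightarrow> j \<notin> F \<longrightarrow> CERT G a (view s')"
    using h by (simp add: eq)
  have c5: "\<forall>a. lock_from s' a \<subseteq> {1..n} \<and> (\<forall>j\<in>lock_from s' a. j \<notin> F \<longrightarrow> (j,a,view s') \<in> GL)"
    using h by (simp add: eq)
  have c6: "\<forall>m\<in>pending s'. msg_ok G GL i m"
    using h E by (simp add: eq; auto simp add: msg_ok_def)
  have c7: "\<forall>j k w pk. proofs s' j = Some (k,w,pk) \<longrightarrow> pk < k \<and> k < int (view s') \<and> (j \<notin> F \<longrightarrow> GP G k w pk)"
    using h by (simp add: eq)
  have c8: "0 \<le> key1 s' \<and> key1 s' \<le> int (view s') \<and> prev_key1 s' < key1 s' \<and> GP G (key1 s') (key1_val s') (prev_key1 s')"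
    using ku vv by (simp add: eq)
  have c9: "0 \<le> lock s' \<and> lock s' \<le> int (view s') \<and> (1 \<le> lock s' \<longrightarrow> CERT G (lock_val s') (nat (lock s')))"
    using h by (simp add: eq)
  have c10: "\<forall>a vb. (i,a,vb) \<in> GL \<longrightarrow> int vb \<le> lock s' \<and> vb \<le> view s'"
    using h by (simp add: eq)
  have c11: "\<forall>a u t. (i,a,u,t) \<in> G \<longrightarrow> u \<le> view s'"
    using h by (simp add: eq)
  have c12: "\<not> propose_recv s' \<longrightarrow> (\<forall>a t. (i,a,view s',t) \<notin> G)"
    using h by (simp add: eq)
  have c13: "echo_wait s' \<noteq> None \<longrightarrow> propose_recv s' \<and> (\<forall>a t. (i,a,view s',t) \<notin> G)"
    using h by (simp add: eq)
  have c14: "\<forall>a. done_by_lock s' = Some a \<longrightarrow> (\<exists>vq. LQ GL a vq)"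
    using h by (simp add: eq)
  show ?thesis unfolding LI_def by (rule conjI[OF c0 conjI[OF c1 conjI[OF c2 conjI[OF c3 conjI[OF c4 conjI[OF c5 conjI[OF c6 conjI[OF c7 conjI[OF c8 conjI[OF c9 conjI[OF c10 conjI[OF c11 conjI[OF c12 conjI[OF c13 c14]]]]]]]]]]]]]])
qed

lemma LI_key1_nc:
  assumes li: "LI i st G GL" and eq: "s' = st\<lparr>key1_from := (key1_from st)(val := insert j (key1_from st val))\<rparr>"
    and vv: "v = view st"
    and ck: "j \<notin> F \<longrightarrow> CERT G val v"
  shows "LI i s' G GL"
proof -
  note h = li[unfolded LI_def]

  have c0: "1 \<le> view s'"
    using h by (simp add: eq)
  have c1: "\<forall>a. echo_from s' a \<subseteq> {1..n} \<and> (\<forall>j\<in>echo_from s' a. j \<notin> F \<longrightarrow> (\<exists>t. (j,a,view s',t) \<in> G))"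
    using h by (simp add: eq)
  have c2: "\<forall>a j. j \<in> key1_from s' a \<longrightarrow> j \<notin> F \<longrightarrow> CERT G a (view s')"
    using h vv ck by (auto simp add: eq)
  have c3: "\<forall>a j. j \<in> key2_from s' a \<longrightarrow> j \<notin> F \<longrightarrow> CERT G a (view s')"
    using h by (simp add: eq)
  have c4: "\<forall>a j. j \<in> key3_from s' a \<longrightarrow> j \<notin> F \<longrightarrow> CERT G a (view s')"
    using h by (simp add: eq)
  have c5: "\<forall>a. lock_from s' a \<subseteq> {1..n} \<and> (\<forall>j\<in>lock_from s' a. j \<notin> F \<longrightarrow> (j,a,view s') \<in> GL)"
    using h by (simp add: eq)
  have c6: "\<forall>m\<in>pending s'. msg_ok G GL i m"
    using h by (simp add: eq)
  have c7: "\<forall>j k w pk. proofs s' j = Some (k,w,pk) \<longrightarrow> pk < k \<and> k < int (view s') \<and> (j \<notin> F \<longrightarrow> GP G k w pk)"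
    using h by (simp add: eq)
  have c8: "0 \<le> key1 s' \<and> key1 s' \<le> int (view s') \<and> prev_key1 s' < key1 s' \<and> GP G (key1 s') (key1_val s') (prev_key1 s')"
    using h by (simp add: eq)
  have c9: "0 \<le> lock s' \<and> lock s' \<le> int (view s') \<and> (1 \<le> lock s' \<longrightarrow> CERT G (lock_val s') (nat (lock s')))"
    using h by (simp add: eq)
  have c10: "\<forall>a vb. (i,a,vb) \<in> GL \<longrightarrow> int vb \<le> lock s' \<and> vb \<le> view s'"
    using h by (simp add: eq)
  have c11: "\<forall>a u t. (i,a,u,t) \<in> G \<longrightarrow> u \<le> view s'"
    using h by (simp add: eq)
  have c12: "\<not> propose_recv s' \<longrightarrow> (\<forall>a t. (i,a,view s',t) \<notin> G)"
    using h by (simp add: eq)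
  have c13: "echo_wait s' \<noteq> None \<longrightarrow> propose_recv s' \<and> (\<forall>a t. (i,a,view s',t) \<notin> G)"
    using h by (simp add: eq)
  have c14: "\<forall>a. done_by_lock s' = Some a \<longrightarrow> (\<exists>vq. LQ GL a vq)"
    using h by (simp add: eq)
  show ?thesis unfolding LI_def by (rule conjI[OF c0 conjI[OF c1 conjI[OF c2 conjI[OF c3 conjI[OF c4 conjI[OF c5 conjI[OF c6 conjI[OF c7 conjI[OF c8 conjI[OF c9 conjI[OF c10 conjI[OF c11 conjI[OF c12 conjI[OF c13 c14]]]]]]]]]]]]]])
qed

lemma LI_key1_c:
  assumes li: "LI i st G GL" and eq: "s' = st\<lparr>key1_from := (key1_from st)(val := insert j (key1_from st val)), pending := insert (MKey2 val v) (pending st), prev_key2 := (if key2_val st \<noteq> val then key2 st else prev_key2 st), key2_val := val, key2 := int v\<rparr>"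
    and vv: "v = view st"
    and ck: "j \<notin> F \<longrightarrow> CERT G val v"
    and cr: "n - f \<le> card (insert j (key1_from st val))"
  shows "LI i s' G GL"
proof -
  note h = li[unfolded LI_def]
  have E: "CERT G val v"
  proof (rule card_quorum_nonF[OF cr])
    fix j' assume "j' \<in> insert j (key1_from st val)" "j' \<notin> F"
    then show "CERT G val v" using h ck vv by auto
  qed
  have c0: "1 \<le> view s'"
    using h by (simp add: eq)
  have c1: "\<forall>a. echo_from s' a \<subseteq> {1..n} \<and> (\<forall>j\<in>echo_from s' a. j \<notin> F \<longrightarrow> (\<exists>t. (j,a,view s',t) \<in> G))"
    using h by (simp add: eq)
  have c2: "\<forall>a j. j \<in> key1_from s' a \<longrightarrow> j \<notin> F \<longrightarrow> CERT G a (view s')"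
    using h vv ck by (auto simp add: eq)
  have c3: "\<forall>a j. j \<in> key2_from s' a \<longrightarrow> j \<notin> F \<longrightarrow> CERT G a (view s')"
    using h by (simp add: eq)
  have c4: "\<forall>a j. j \<in> key3_from s' a \<longrightarrow> j \<notin> F \<longrightarrow> CERT G a (view s')"
    using h by (simp add: eq)
  have c5: "\<forall>a. lock_from s' a \<subseteq> {1..n} \<and> (\<forall>j\<in>lock_from s' a. j \<notin> F \<longrightarrow> (j,a,view s') \<in> GL)"
    using h by (simp add: eq)
  have c6: "\<forall>m\<in>pending s'. msg_ok G GL i m"
    using h E by (simp add: eq; auto simp add: msg_ok_def)
  have c7: "\<forall>j k w pk. proofs s' j = Some (k,w,pk) \<longrightarrow> pk < k \<and> k < int (view s') \<and> (j \<notin> F \<longrightarrow> GP G k w pk)"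
    using h by (simp add: eq)
  have c8: "0 \<le> key1 s' \<and> key1 s' \<le> int (view s') \<and> prev_key1 s' < key1 s' \<and> GP G (key1 s') (key1_val s') (prev_key1 s')"
    using h by (simp add: eq)
  have c9: "0 \<le> lock s' \<and> lock s' \<le> int (view s') \<and> (1 \<le> lock s' \<longrightarrow> CERT G (lock_val s') (nat (lock s')))"
    using h by (simp add: eq)
  have c10: "\<forall>a vb. (i,a,vb) \<in> GL \<longrightarrow> int vb \<le> lock s' \<and> vb \<le> view s'"
    using h by (simp add: eq)
  have c11: "\<forall>a u t. (i,a,u,t) \<in> G \<longrightarrow> u \<le> view s'"
    using h by (simp add: eq)
  have c12: "\<not> propose_recv s' \<longrightarrow> (\<forall>a t. (i,a,view s',t) \<notin> G)"
    using h by (simp add: eq)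
  have c13: "echo_wait s' \<noteq> None \<longrightarrow> propose_recv s' \<and> (\<forall>a t. (i,a,view s',t) \<notin> G)"
    using h by (simp add: eq)
  have c14: "\<forall>a. done_by_lock s' = Some a \<longrightarrow> (\<exists>vq. LQ GL a vq)"
    using h by (simp add: eq)
  show ?thesis unfolding LI_def by (rule conjI[OF c0 conjI[OF c1 conjI[OF c2 conjI[OF c3 conjI[OF c4 conjI[OF c5 conjI[OF c6 conjI[OF c7 conjI[OF c8 conjI[OF c9 conjI[OF c10 conjI[OF c11 conjI[OF c12 conjI[OF c13 c14]]]]]]]]]]]]]])
qed

lemma LI_key2_nc:
  assumes li: "LI i st G GL" and eq: "s' = st\<lparr>key2_from := (key2_from st)(val := insert j (key2_from st val))\<rparr>"
    and vv: "v = view st"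
    and ck: "j \<notin> F \<longrightarrow> CERT G val v"
  shows "LI i s' G GL"
proof -
  note h = li[unfolded LI_def]

  have c0: "1 \<le> view s'"
    using h by (simp add: eq)
  have c1: "\<forall>a. echo_from s' a \<subseteq> {1..n} \<and> (\<forall>j\<in>echo_from s' a. j \<notin> F \<longrightarrow> (\<exists>t. (j,a,view s',t) \<in> G))"
    using h by (simp add: eq)
  have c2: "\<forall>a j. j \<in> key1_from s' a \<longrightarrow> j \<notin> F \<longrightarrow> CERT G a (view s')"
    using h by (simp add: eq)
  have c3: "\<forall>a j. j \<in> key2_from s' a \<longrightarrow> j \<notin> F \<longrightarrow> CERT G a (view s')"
    using h vv ck by (auto simp add: eq)
  have c4: "\<forall>a j. j \<in> key3_from s' a \<longrightarrow> j \<notin> F \<longrightarrow> CERT G a (view s')"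
    using h by (simp add: eq)
  have c5: "\<forall>a. lock_from s' a \<subseteq> {1..n} \<and> (\<forall>j\<in>lock_from s' a. j \<notin> F \<longrightarrow> (j,a,view s') \<in> GL)"
    using h by (simp add: eq)
  have c6: "\<forall>m\<in>pending s'. msg_ok G GL i m"
    using h by (simp add: eq)
  have c7: "\<forall>j k w pk. proofs s' j = Some (k,w,pk) \<longrightarrow> pk < k \<and> k < int (view s') \<and> (j \<notin> F \<longrightarrow> GP G k w pk)"
    using h by (simp add: eq)
  have c8: "0 \<le> key1 s' \<and> key1 s' \<le> int (view s') \<and> prev_key1 s' < key1 s' \<and> GP G (key1 s') (key1_val s') (prev_key1 s')"
    using h by (simp add: eq)
  have c9: "0 \<le> lock s' \<and> lock s' \<le> int (view s') \<and> (1 \<le> lock s' \<longrightarrow> CERT G (lock_val s') (nat (lock s')))"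
    using h by (simp add: eq)
  have c10: "\<forall>a vb. (i,a,vb) \<in> GL \<longrightarrow> int vb \<le> lock s' \<and> vb \<le> view s'"
    using h by (simp add: eq)
  have c11: "\<forall>a u t. (i,a,u,t) \<in> G \<longrightarrow> u \<le> view s'"
    using h by (simp add: eq)
  have c12: "\<not> propose_recv s' \<longrightarrow> (\<forall>a t. (i,a,view s',t) \<notin> G)"
    using h by (simp add: eq)
  have c13: "echo_wait s' \<noteq> None \<longrightarrow> propose_recv s' \<and> (\<forall>a t. (i,a,view s',t) \<notin> G)"
    using h by (simp add: eq)
  have c14: "\<forall>a. done_by_lock s' = Some a \<longrightarrow> (\<exists>vq. LQ GL a vq)"
    using h by (simp add: eq)
  show ?thesis unfolding LI_def by (rule conjI[OF c0 conjI[OF c1 conjI[OF c2 conjI[OF c3 conjI[OF c4 conjI[OF c5 conjI[OF c6 conjI[OF c7 conjI[OF c8 conjI[OF c9 conjI[OF c10 conjI[OF c11 conjI[OF c12 conjI[OF c13 c14]]]]]]]]]]]]]])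
qed

lemma LI_key2_c:
  assumes li: "LI i st G GL" and eq: "s' = st\<lparr>key2_from := (key2_from st)(val := insert j (key2_from st val)), pending := insert (MKey3 val v) (pending st), key3 := int v, key3_val := val\<rparr>"
    and vv: "v = view st"
    and ck: "j \<notin> F \<longrightarrow> CERT G val v"
    and cr: "n - f \<le> card (insert j (key2_from st val))"
  shows "LI i s' G GL"
proof -
  note h = li[unfolded LI_def]
  have E: "CERT G val v"
  proof (rule card_quorum_nonF[OF cr])
    fix j' assume "j' \<in> insert j (key2_from st val)" "j' \<notin> F"
    then show "CERT G val v" using h ck vv by auto
  qed
  have c0: "1 \<le> view s'"
    using h by (simp add: eq)
  have c1: "\<forall>a. echo_from s' a \<subseteq> {1..n} \<and> (\<forall>j\<in>echo_from s' a. j \<notin> F \<longrightarrow> (\<exists>t. (j,a,view s',t) \<in> G))"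
    using h by (simp add: eq)
  have c2: "\<forall>a j. j \<in> key1_from s' a \<longrightarrow> j \<notin> F \<longrightarrow> CERT G a (view s')"
    using h by (simp add: eq)
  have c3: "\<forall>a j. j \<in> key2_from s' a \<longrightarrow> j \<notin> F \<longrightarrow> CERT G a (view s')"
    using h vv ck by (auto simp add: eq)
  have c4: "\<forall>a j. j \<in> key3_from s' a \<longrightarrow> j \<notin> F \<longrightarrow> CERT G a (view s')"
    using h by (simp add: eq)
  have c5: "\<forall>a. lock_from s' a \<subseteq> {1..n} \<and> (\<forall>j\<in>lock_from s' a. j \<notin> F \<longrightarrow> (j,a,view s') \<in> GL)"
    using h by (simp add: eq)
  have c6: "\<forall>m\<in>pending s'. msg_ok G GL i m"
    using h E by (simp add: eq; auto simp add: msg_ok_def)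
  have c7: "\<forall>j k w pk. proofs s' j = Some (k,w,pk) \<longrightarrow> pk < k \<and> k < int (view s') \<and> (j \<notin> F \<longrightarrow> GP G k w pk)"
    using h by (simp add: eq)
  have c8: "0 \<le> key1 s' \<and> key1 s' \<le> int (view s') \<and> prev_key1 s' < key1 s' \<and> GP G (key1 s') (key1_val s') (prev_key1 s')"
    using h by (simp add: eq)
  have c9: "0 \<le> lock s' \<and> lock s' \<le> int (view s') \<and> (1 \<le> lock s' \<longrightarrow> CERT G (lock_val s') (nat (lock s')))"
    using h by (simp add: eq)
  have c10: "\<forall>a vb. (i,a,vb) \<in> GL \<longrightarrow> int vb \<le> lock s' \<and> vb \<le> view s'"
    using h by (simp add: eq)
  have c11: "\<forall>a u t. (i,a,u,t) \<in> G \<longrightarrow> u \<le> view s'"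
    using h by (simp add: eq)
  have c12: "\<not> propose_recv s' \<longrightarrow> (\<forall>a t. (i,a,view s',t) \<notin> G)"
    using h by (simp add: eq)
  have c13: "echo_wait s' \<noteq> None \<longrightarrow> propose_recv s' \<and> (\<forall>a t. (i,a,view s',t) \<notin> G)"
    using h by (simp add: eq)
  have c14: "\<forall>a. done_by_lock s' = Some a \<longrightarrow> (\<exists>vq. LQ GL a vq)"
    using h by (simp add: eq)
  show ?thesis unfolding LI_def by (rule conjI[OF c0 conjI[OF c1 conjI[OF c2 conjI[OF c3 conjI[OF c4 conjI[OF c5 conjI[OF c6 conjI[OF c7 conjI[OF c8 conjI[OF c9 conjI[OF c10 conjI[OF c11 conjI[OF c12 conjI[OF c13 c14]]]]]]]]]]]]]])
qed

lemma LI_key3_nc: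
  assumes li: "LI i st G GL" and eq: "s' = st\<lparr>key3_from := (key3_from st)(val := insert j (key3_from st val))\<rparr>"
    and vv: "v = view st"
    and ck: "j \<notin> F \<longrightarrow> CERT G val v"
  shows "LI i s' G GL"
proof -
  note h = li[unfolded LI_def]

  have c0: "1 \<le> view s'"
    using h by (simp add: eq)
  have c1: "\<forall>a. echo_from s' a \<subseteq> {1..n} \<and> (\<forall>j\<in>echo_from s' a. j \<notin> F \<longrightarrow> (\<exists>t. (j,a,view s',t) \<in> G))"
    using h by (simp add: eq)
  have c2: "\<forall>a j. j \<in> key1_from s' a \<longrightarrow> j \<notin> F \<longrightarrow> CERT G a (view s')"
    using h by (simp add: eq)
  have c3: "\<forall>a j. j \<in> key2_from s' a \<longrightarrow> j \<notin> F \<longrightarrow> CERT G a (view s')"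
    using h by (simp add: eq)
  have c4: "\<forall>a j. j \<in> key3_from s' a \<longrightarrow> j \<notin> F \<longrightarrow> CERT G a (view s')"
    using h vv ck by (auto simp add: eq)
  have c5: "\<forall>a. lock_from s' a \<subseteq> {1..n} \<and> (\<forall>j\<in>lock_from s' a. j \<notin> F \<longrightarrow> (j,a,view s') \<in> GL)"
    using h by (simp add: eq)
  have c6: "\<forall>m\<in>pending s'. msg_ok G GL i m"
    using h by (simp add: eq)
  have c7: "\<forall>j k w pk. proofs s' j = Some (k,w,pk) \<longrightarrow> pk < k \<and> k < int (view s') \<and> (j \<notin> F \<longrightarrow> GP G k w pk)"
    using h by (simp add: eq)
  have c8: "0 \<le> key1 s' \<and> key1 s' \<le> int (view s') \<and> prev_key1 s' < key1 s' \<and> GP G (key1 s') (key1_val s') (prev_key1 s')"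
    using h by (simp add: eq)
  have c9: "0 \<le> lock s' \<and> lock s' \<le> int (view s') \<and> (1 \<le> lock s' \<longrightarrow> CERT G (lock_val s') (nat (lock s')))"
    using h by (simp add: eq)
  have c10: "\<forall>a vb. (i,a,vb) \<in> GL \<longrightarrow> int vb \<le> lock s' \<and> vb \<le> view s'"
    using h by (simp add: eq)
  have c11: "\<forall>a u t. (i,a,u,t) \<in> G \<longrightarrow> u \<le> view s'"
    using h by (simp add: eq)
  have c12: "\<not> propose_recv s' \<longrightarrow> (\<forall>a t. (i,a,view s',t) \<notin> G)"
    using h by (simp add: eq)
  have c13: "echo_wait s' \<noteq> None \<longrightarrow> propose_recv s' \<and> (\<forall>a t. (i,a,view s',t) \<notin> G)"
    using h by (simp add: eq)
  have c14: "\<forall>a. done_by_lock s' = Some a \<longrightarrow> (\<exists>vq. LQ GL a vq)"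
    using h by (simp add: eq)
  show ?thesis unfolding LI_def by (rule conjI[OF c0 conjI[OF c1 conjI[OF c2 conjI[OF c3 conjI[OF c4 conjI[OF c5 conjI[OF c6 conjI[OF c7 conjI[OF c8 conjI[OF c9 conjI[OF c10 conjI[OF c11 conjI[OF c12 conjI[OF c13 c14]]]]]]]]]]]]]])
qed

lemma LI_key3_c:
  assumes li: "LI i st G GL" and eq: "s' = st\<lparr>key3_from := (key3_from st)(val := insert j (key3_from st val)), pending := insert (MLock val v) (pending st), lock := int v, lock_val := val\<rparr>"
    and vv: "v = view st"
    and ck: "j \<notin> F \<longrightarrow> CERT G val v"
    and cr: "n - f \<le> card (insert j (key3_from st val))"
  shows "LI i s' G (insert (i,val,v) GL)"
proof -
  note h = li[unfolded LI_def]
  have E: "CERT G val v"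
  proof (rule card_quorum_nonF[OF cr])
    fix j' assume "j' \<in> insert j (key3_from st val)" "j' \<notin> F"
    then show "CERT G val v" using h ck vv by auto
  qed
  have subL: "GL \<subseteq> insert (i,val,v) GL" by blast
  note hA = LI_monoA[OF li subset_refl subL]
  have c0: "1 \<le> view s'"
    using hA h by (simp add: eq)
  have c1: "\<forall>a. echo_from s' a \<subseteq> {1..n} \<and> (\<forall>j\<in>echo_from s' a. j \<notin> F \<longrightarrow> (\<exists>t. (j,a,view s',t) \<in> G))"
    using hA h by (simp add: eq)
  have c2: "\<forall>a j. j \<in> key1_from s' a \<longrightarrow> j \<notin> F \<longrightarrow> CERT G a (view s')"
    using hA h by (simp add: eq)
  have c3: "\<forall>a j. j \<in> key2_from s' a \<longrightarrow> j \<notin> F \<longrightarrow> CERT G a (view s')"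
    using hA h by (simp add: eq)
  have c4: "\<forall>a j. j \<in> key3_from s' a \<longrightarrow> j \<notin> F \<longrightarrow> CERT G a (view s')"
    using h vv ck by (auto simp add: eq)
  have c5: "\<forall>a. lock_from s' a \<subseteq> {1..n} \<and> (\<forall>j\<in>lock_from s' a. j \<notin> F \<longrightarrow> (j,a,view s') \<in> (insert (i,val,v) GL))"
    using hA h by (simp add: eq)
  have c6: "\<forall>m\<in>pending s'. msg_ok G (insert (i,val,v) GL) i m"
    using hA vv by (simp add: eq; auto simp add: msg_ok_def)
  have c7: "\<forall>j k w pk. proofs s' j = Some (k,w,pk) \<longrightarrow> pk < k \<and> k < int (view s') \<and> (j \<notin> F \<longrightarrow> GP G k w pk)"
    using hA h by (simp add: eq)
  have c8: "0 \<le> key1 s' \<and> key1 s' \<le> int (view s') \<and> prev_key1 s' < key1 s' \<and> GP G (key1 s') (key1_val s') (prev_key1 s')"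
    using hA h by (simp add: eq)
  have c9: "0 \<le> lock s' \<and> lock s' \<le> int (view s') \<and> (1 \<le> lock s' \<longrightarrow> CERT G (lock_val s') (nat (lock s')))"
    using E vv by (simp add: eq)
  have c10: "\<forall>a vb. (i,a,vb) \<in> (insert (i,val,v) GL) \<longrightarrow> int vb \<le> lock s' \<and> vb \<le> view s'"
    proof (intro allI impI)
      fix a v' assume a: "(i,a,v') \<in> insert (i,val,v) GL"
      have gl0: "\<forall>a v'. (i,a,v') \<in> GL \<longrightarrow> int v' \<le> lock st \<and> v' \<le> view st" using h by meson
      have lv: "lock st \<le> int (view st)" using h by meson
      have e: "lock s' = int v" "view s' = view st" by (simp_all add: eq)
      show "int v' \<le> lock s' \<and> v' \<le> view s'" unfolding e using a gl0 lv vv by force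
    qed
  have c11: "\<forall>a u t. (i,a,u,t) \<in> G \<longrightarrow> u \<le> view s'"
    using hA h by (simp add: eq)
  have c12: "\<not> propose_recv s' \<longrightarrow> (\<forall>a t. (i,a,view s',t) \<notin> G)"
    using hA h by (simp add: eq)
  have c13: "echo_wait s' \<noteq> None \<longrightarrow> propose_recv s' \<and> (\<forall>a t. (i,a,view s',t) \<notin> G)"
    using hA h by (simp add: eq)
  have c14: "\<forall>a. done_by_lock s' = Some a \<longrightarrow> (\<exists>vq. LQ (insert (i,val,v) GL) a vq)"
    using hA h by (simp add: eq)
  show ?thesis unfolding LI_def by (rule conjI[OF c0 conjI[OF c1 conjI[OF c2 conjI[OF c3 conjI[OF c4 conjI[OF c5 conjI[OF c6 conjI[OF c7 conjI[OF c8 conjI[OF c9 conjI[OF c10 conjI[OF c11 conjI[OF c12 conjI[OF c13 c14]]]]]]]]]]]]]])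
qed

lemma LI_lock_nc:
  assumes li: "LI i st G GL" and eq: "s' = st\<lparr>lock_from := (lock_from st)(val := insert j (lock_from st val))\<rparr>"
    and vv: "v = view st"
    and jn: "j \<in> {1..n}"
    and gl: "j \<notin> F \<longrightarrow> (j,val,v) \<in> GL"
  shows "LI i s' G GL"
proof -
  note h = li[unfolded LI_def]

  have c0: "1 \<le> view s'"
    using h by (simp add: eq)
  have c1: "\<forall>a. echo_from s' a \<subseteq> {1..n} \<and> (\<forall>j\<in>echo_from s' a. j \<notin> F \<longrightarrow> (\<exists>t. (j,a,view s',t) \<in> G))"
    using h by (simp add: eq)
  have c2: "\<forall>a j. j \<in> key1_from s' a \<longrightarrow> j \<notin> F \<longrightarrow> CERT G a (view s')"
    using h by (simp add: eq)
  have c3: "\<forall>a j. j \<in> key2_from s' a \<longrightarrow> j \<notin> F \<longrightarrow> CERT G a (view s')"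
    using h by (simp add: eq)
  have c4: "\<forall>a j. j \<in> key3_from s' a \<longrightarrow> j \<notin> F \<longrightarrow> CERT G a (view s')"
    using h by (simp add: eq)
  have c5: "\<forall>a. lock_from s' a \<subseteq> {1..n} \<and> (\<forall>j\<in>lock_from s' a. j \<notin> F \<longrightarrow> (j,a,view s') \<in> GL)"
    using h vv jn gl by (auto simp add: eq)
  have c6: "\<forall>m\<in>pending s'. msg_ok G GL i m"
    using h by (simp add: eq)
  have c7: "\<forall>j k w pk. proofs s' j = Some (k,w,pk) \<longrightarrow> pk < k \<and> k < int (view s') \<and> (j \<notin> F \<longrightarrow> GP G k w pk)"
    using h by (simp add: eq)
  have c8: "0 \<le> key1 s' \<and> key1 s' \<le> int (view s') \<and> prev_key1 s' < key1 s' \<and> GP G (key1 s') (key1_val s') (prev_key1 s')"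
    using h by (simp add: eq)
  have c9: "0 \<le> lock s' \<and> lock s' \<le> int (view s') \<and> (1 \<le> lock s' \<longrightarrow> CERT G (lock_val s') (nat (lock s')))"
    using h by (simp add: eq)
  have c10: "\<forall>a vb. (i,a,vb) \<in> GL \<longrightarrow> int vb \<le> lock s' \<and> vb \<le> view s'"
    using h by (simp add: eq)
  have c11: "\<forall>a u t. (i,a,u,t) \<in> G \<longrightarrow> u \<le> view s'"
    using h by (simp add: eq)
  have c12: "\<not> propose_recv s' \<longrightarrow> (\<forall>a t. (i,a,view s',t) \<notin> G)"
    using h by (simp add: eq)
  have c13: "echo_wait s' \<noteq> None \<longrightarrow> propose_recv s' \<and> (\<forall>a t. (i,a,view s',t) \<notin> G)"
    using h by (simp add: eq)
  have c14: "\<forall>a. done_by_lock s' = Some a \<longrightarrow> (\<exists>vq. LQ GL a vq)"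
    using h by (simp add: eq)
  show ?thesis unfolding LI_def by (rule conjI[OF c0 conjI[OF c1 conjI[OF c2 conjI[OF c3 conjI[OF c4 conjI[OF c5 conjI[OF c6 conjI[OF c7 conjI[OF c8 conjI[OF c9 conjI[OF c10 conjI[OF c11 conjI[OF c12 conjI[OF c13 c14]]]]]]]]]]]]]])
qed

lemma LI_lock_c:
  assumes li: "LI i st G GL" and eq: "s' = st\<lparr>lock_from := (lock_from st)(val := insert j (lock_from st val)), done_sent := True, done_by_lock := Some val\<rparr>"
    and vv: "v = view st"
    and jn: "j \<in> {1..n}"
    and gl: "j \<notin> F \<longrightarrow> (j,val,v) \<in> GL"
    and cr: "n - f \<le> card (insert j (lock_from st val))"
  shows "LI i s' G GL"
proof -
  note h = li[unfolded LI_def]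
  have LQv: "LQ GL val v" unfolding LQ_def
  proof (intro exI[of _ "insert j (lock_from st val)"] conjI)
    show "insert j (lock_from st val) \<subseteq> {1..n}" using h jn by simp
    show "n - f \<le> card (insert j (lock_from st val))" using cr .
    show "\<forall>j'\<in>insert j (lock_from st val). j' \<notin> F \<longrightarrow> (j',val,v) \<in> GL" using h gl vv by auto
  qed
  have c0: "1 \<le> view s'"
    using h by (simp add: eq)
  have c1: "\<forall>a. echo_from s' a \<subseteq> {1..n} \<and> (\<forall>j\<in>echo_from s' a. j \<notin> F \<longrightarrow> (\<exists>t. (j,a,view s',t) \<in> G))"
    using h by (simp add: eq)
  have c2: "\<forall>a j. j \<in> key1_from s' a \<longrightarrow> j \<notin> F \<longrightarrow> CERT G a (view s')"
    using h by (simp add: eq)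
  have c3: "\<forall>a j. j \<in> key2_from s' a \<longrightarrow> j \<notin> F \<longrightarrow> CERT G a (view s')"
    using h by (simp add: eq)
  have c4: "\<forall>a j. j \<in> key3_from s' a \<longrightarrow> j \<notin> F \<longrightarrow> CERT G a (view s')"
    using h by (simp add: eq)
  have c5: "\<forall>a. lock_from s' a \<subseteq> {1..n} \<and> (\<forall>j\<in>lock_from s' a. j \<notin> F \<longrightarrow> (j,a,view s') \<in> GL)"
    using h vv jn gl by (auto simp add: eq)
  have c6: "\<forall>m\<in>pending s'. msg_ok G GL i m"
    using h by (simp add: eq)
  have c7: "\<forall>j k w pk. proofs s' j = Some (k,w,pk) \<longrightarrow> pk < k \<and> k < int (view s') \<and> (j \<notin> F \<longrightarrow> GP G k w pk)"
    using h by (simp add: eq)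
  have c8: "0 \<le> key1 s' \<and> key1 s' \<le> int (view s') \<and> prev_key1 s' < key1 s' \<and> GP G (key1 s') (key1_val s') (prev_key1 s')"
    using h by (simp add: eq)
  have c9: "0 \<le> lock s' \<and> lock s' \<le> int (view s') \<and> (1 \<le> lock s' \<longrightarrow> CERT G (lock_val s') (nat (lock s')))"
    using h by (simp add: eq)
  have c10: "\<forall>a vb. (i,a,vb) \<in> GL \<longrightarrow> int vb \<le> lock s' \<and> vb \<le> view s'"
    using h by (simp add: eq)
  have c11: "\<forall>a u t. (i,a,u,t) \<in> G \<longrightarrow> u \<le> view s'"
    using h by (simp add: eq)
  have c12: "\<not> propose_recv s' \<longrightarrow> (\<forall>a t. (i,a,view s',t) \<notin> G)"
    using h by (simp add: eq)
  have c13: "echo_wait s' \<noteq> None \<longrightarrow> propose_recv s' \<and> (\<forall>a t. (i,a,view s',t) \<notin> G)"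
    using h by (simp add: eq)
  have c14: "\<forall>a. done_by_lock s' = Some a \<longrightarrow> (\<exists>vq. LQ GL a vq)"
    using LQv by (simp add: eq; blast)
  show ?thesis unfolding LI_def by (rule conjI[OF c0 conjI[OF c1 conjI[OF c2 conjI[OF c3 conjI[OF c4 conjI[OF c5 conjI[OF c6 conjI[OF c7 conjI[OF c8 conjI[OF c9 conjI[OF c10 conjI[OF c11 conjI[OF c12 conjI[OF c13 c14]]]]]]]]]]]]]])
qed

lemma LI_prop_echo:
  assumes li: "LI i st G GL" and eq: "s' = st\<lparr>propose_recv := True, pending := insert (MEcho val v) (pending st)\<rparr>"
    and vv: "v = view st"
    and np: "\<not> propose_recv st"
  shows "LI i s' (insert (i,val,v,clk) G) GL"
proof -
  note h = li[unfolded LI_def]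
  have sub: "G \<subseteq> insert (i,val,v,clk) G" by blast
  note hA = LI_monoA[OF li sub subset_refl]
  have c0: "1 \<le> view s'"
    using hA h by (simp add: eq)
  have c1: "\<forall>a. echo_from s' a \<subseteq> {1..n} \<and> (\<forall>j\<in>echo_from s' a. j \<notin> F \<longrightarrow> (\<exists>t. (j,a,view s',t) \<in> (insert (i,val,v,clk) G)))"
    using hA h by (simp add: eq)
  have c2: "\<forall>a j. j \<in> key1_from s' a \<longrightarrow> j \<notin> F \<longrightarrow> CERT (insert (i,val,v,clk) G) a (view s')"
    using hA h by (simp add: eq)
  have c3: "\<forall>a j. j \<in> key2_from s' a \<longrightarrow> j \<notin> F \<longrightarrow> CERT (insert (i,val,v,clk) G) a (view s')"
    using hA h by (simp add: eq)
  have c4: "\<forall>a j. j \<in> key3_from s' a \<longrightarrow> j \<notin> F \<longrightarrow> CERT (insert (i,val,v,clk) G) a (view s')"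
    using hA h by (simp add: eq)
  have c5: "\<forall>a. lock_from s' a \<subseteq> {1..n} \<and> (\<forall>j\<in>lock_from s' a. j \<notin> F \<longrightarrow> (j,a,view s') \<in> GL)"
    using hA h by (simp add: eq)
  have c6: "\<forall>m\<in>pending s'. msg_ok (insert (i,val,v,clk) G) GL i m"
    using hA by (simp add: eq; auto simp add: msg_ok_def)
  have c7: "\<forall>j k w pk. proofs s' j = Some (k,w,pk) \<longrightarrow> pk < k \<and> k < int (view s') \<and> (j \<notin> F \<longrightarrow> GP (insert (i,val,v,clk) G) k w pk)"
    using hA h by (simp add: eq)
  have c8: "0 \<le> key1 s' \<and> key1 s' \<le> int (view s') \<and> prev_key1 s' < key1 s' \<and> GP (insert (i,val,v,clk) G) (key1 s') (key1_val s') (prev_key1 s')"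
    using hA h by (simp add: eq)
  have c9: "0 \<le> lock s' \<and> lock s' \<le> int (view s') \<and> (1 \<le> lock s' \<longrightarrow> CERT (insert (i,val,v,clk) G) (lock_val s') (nat (lock s')))"
    using hA h by (simp add: eq)
  have c10: "\<forall>a vb. (i,a,vb) \<in> GL \<longrightarrow> int vb \<le> lock s' \<and> vb \<le> view s'"
    using hA h by (simp add: eq)
  have c11: "\<forall>a u t. (i,a,u,t) \<in> (insert (i,val,v,clk) G) \<longrightarrow> u \<le> view s'"
    using h vv by (auto simp add: eq)
  have c12: "\<not> propose_recv s' \<longrightarrow> (\<forall>a t. (i,a,view s',t) \<notin> (insert (i,val,v,clk) G))"
    by (simp add: eq)
  have c13: "echo_wait s' \<noteq> None \<longrightarrow> propose_recv s' \<and> (\<forall>a t. (i,a,view s',t) \<notin> (insert (i,val,v,clk) G))"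
    using h np by (simp add: eq)
  have c14: "\<forall>a. done_by_lock s' = Some a \<longrightarrow> (\<exists>vq. LQ GL a vq)"
    using hA h by (simp add: eq)
  show ?thesis unfolding LI_def by (rule conjI[OF c0 conjI[OF c1 conjI[OF c2 conjI[OF c3 conjI[OF c4 conjI[OF c5 conjI[OF c6 conjI[OF c7 conjI[OF c8 conjI[OF c9 conjI[OF c10 conjI[OF c11 conjI[OF c12 conjI[OF c13 c14]]]]]]]]]]]]]])
qed

lemma LI_prop_wait:
  assumes li: "LI i st G GL" and eq: "s' = st\<lparr>propose_recv := True, echo_wait := Some val\<rparr>"
    and vv: "v = view st"
    and np: "\<not> propose_recv st"
  shows "LI i s' G GL"
proof -
  note h = li[unfolded LI_def]

  have c0: "1 \<le> view s'"
    using h by (simp add: eq)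
  have c1: "\<forall>a. echo_from s' a \<subseteq> {1..n} \<and> (\<forall>j\<in>echo_from s' a. j \<notin> F \<longrightarrow> (\<exists>t. (j,a,view s',t) \<in> G))"
    using h by (simp add: eq)
  have c2: "\<forall>a j. j \<in> key1_from s' a \<longrightarrow> j \<notin> F \<longrightarrow> CERT G a (view s')"
    using h by (simp add: eq)
  have c3: "\<forall>a j. j \<in> key2_from s' a \<longrightarrow> j \<notin> F \<longrightarrow> CERT G a (view s')"
    using h by (simp add: eq)
  have c4: "\<forall>a j. j \<in> key3_from s' a \<longrightarrow> j \<notin> F \<longrightarrow> CERT G a (view s')"
    using h by (simp add: eq)
  have c5: "\<forall>a. lock_from s' a \<subseteq> {1..n} \<and> (\<forall>j\<in>lock_from s' a. j \<notin> F \<longrightarrow> (j,a,view s') \<in> GL)"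
    using h by (simp add: eq)
  have c6: "\<forall>m\<in>pending s'. msg_ok G GL i m"
    using h by (simp add: eq)
  have c7: "\<forall>j k w pk. proofs s' j = Some (k,w,pk) \<longrightarrow> pk < k \<and> k < int (view s') \<and> (j \<notin> F \<longrightarrow> GP G k w pk)"
    using h by (simp add: eq)
  have c8: "0 \<le> key1 s' \<and> key1 s' \<le> int (view s') \<and> prev_key1 s' < key1 s' \<and> GP G (key1 s') (key1_val s') (prev_key1 s')"
    using h by (simp add: eq)
  have c9: "0 \<le> lock s' \<and> lock s' \<le> int (view s') \<and> (1 \<le> lock s' \<longrightarrow> CERT G (lock_val s') (nat (lock s')))"
    using h by (simp add: eq)
  have c10: "\<forall>a vb. (i,a,vb) \<in> GL \<longrightarrow> int vb \<le> lock s' \<and> vb \<le> view s'"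
    using h by (simp add: eq)
  have c11: "\<forall>a u t. (i,a,u,t) \<in> G \<longrightarrow> u \<le> view s'"
    using h by (simp add: eq)
  have c12: "\<not> propose_recv s' \<longrightarrow> (\<forall>a t. (i,a,view s',t) \<notin> G)"
    using h by (simp add: eq)
  have c13: "echo_wait s' \<noteq> None \<longrightarrow> propose_recv s' \<and> (\<forall>a t. (i,a,view s',t) \<notin> G)"
    using h np by (simp add: eq)
  have c14: "\<forall>a. done_by_lock s' = Some a \<longrightarrow> (\<exists>vq. LQ GL a vq)"
    using h by (simp add: eq)
  show ?thesis unfolding LI_def by (rule conjI[OF c0 conjI[OF c1 conjI[OF c2 conjI[OF c3 conjI[OF c4 conjI[OF c5 conjI[OF c6 conjI[OF c7 conjI[OF c8 conjI[OF c9 conjI[OF c10 conjI[OF c11 conjI[OF c12 conjI[OF c13 c14]]]]]]]]]]]]]])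
qed

lemma LI_prop_none:
  assumes li: "LI i st G GL" and eq: "s' = st\<lparr>propose_recv := True\<rparr>"
    and np: "\<not> propose_recv st"
  shows "LI i s' G GL"
proof -
  note h = li[unfolded LI_def]

  have c0: "1 \<le> view s'"
    using h by (simp add: eq)
  have c1: "\<forall>a. echo_from s' a \<subseteq> {1..n} \<and> (\<forall>j\<in>echo_from s' a. j \<notin> F \<longrightarrow> (\<exists>t. (j,a,view s',t) \<in> G))"
    using h by (simp add: eq)
  have c2: "\<forall>a j. j \<in> key1_from s' a \<longrightarrow> j \<notin> F \<longrightarrow> CERT G a (view s')"
    using h by (simp add: eq)
  have c3: "\<forall>a j. j \<in> key2_from s' a \<longrightarrow> j \<notin> F \<longrightarrow> CERT G a (view s')"
    using h by (simp add: eq)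
  have c4: "\<forall>a j. j \<in> key3_from s' a \<longrightarrow> j \<notin> F \<longrightarrow> CERT G a (view s')"
    using h by (simp add: eq)
  have c5: "\<forall>a. lock_from s' a \<subseteq> {1..n} \<and> (\<forall>j\<in>lock_from s' a. j \<notin> F \<longrightarrow> (j,a,view s') \<in> GL)"
    using h by (simp add: eq)
  have c6: "\<forall>m\<in>pending s'. msg_ok G GL i m"
    using h by (simp add: eq)
  have c7: "\<forall>j k w pk. proofs s' j = Some (k,w,pk) \<longrightarrow> pk < k \<and> k < int (view s') \<and> (j \<notin> F \<longrightarrow> GP G k w pk)"
    using h by (simp add: eq)
  have c8: "0 \<le> key1 s' \<and> key1 s' \<le> int (view s') \<and> prev_key1 s' < key1 s' \<and> GP G (key1 s') (key1_val s') (prev_key1 s')"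
    using h by (simp add: eq)
  have c9: "0 \<le> lock s' \<and> lock s' \<le> int (view s') \<and> (1 \<le> lock s' \<longrightarrow> CERT G (lock_val s') (nat (lock s')))"
    using h by (simp add: eq)
  have c10: "\<forall>a vb. (i,a,vb) \<in> GL \<longrightarrow> int vb \<le> lock s' \<and> vb \<le> view s'"
    using h by (simp add: eq)
  have c11: "\<forall>a u t. (i,a,u,t) \<in> G \<longrightarrow> u \<le> view s'"
    using h by (simp add: eq)
  have c12: "\<not> propose_recv s' \<longrightarrow> (\<forall>a t. (i,a,view s',t) \<notin> G)"
    using h by (simp add: eq)
  have c13: "echo_wait s' \<noteq> None \<longrightarrow> propose_recv s' \<and> (\<forall>a t. (i,a,view s',t) \<notin> G)"
    using h np by (simp add: eq)
  have c14: "\<forall>a. done_by_lock s' = Some a \<longrightarrow> (\<exists>vq. LQ GL a vq)"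
    using h by (simp add: eq)
  show ?thesis unfolding LI_def by (rule conjI[OF c0 conjI[OF c1 conjI[OF c2 conjI[OF c3 conjI[OF c4 conjI[OF c5 conjI[OF c6 conjI[OF c7 conjI[OF c8 conjI[OF c9 conjI[OF c10 conjI[OF c11 conjI[OF c12 conjI[OF c13 c14]]]]]]]]]]]]]])
qed

lemma LI_int_echo:
  assumes li: "LI i st G GL" and eq: "s' = st\<lparr>echo_wait := None, pending := insert (MEcho val (view st)) (pending st)\<rparr>"
    and ew: "echo_wait st = Some val"
  shows "LI i s' (insert (i,val,view st,clk) G) GL"
proof -
  note h = li[unfolded LI_def]
  have sub: "G \<subseteq> insert (i,val,view st,clk) G" by blast
  note hA = LI_monoA[OF li sub subset_refl]
  have c0: "1 \<le> view s'"
    using hA h by (simp add: eq)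
  have c1: "\<forall>a. echo_from s' a \<subseteq> {1..n} \<and> (\<forall>j\<in>echo_from s' a. j \<notin> F \<longrightarrow> (\<exists>t. (j,a,view s',t) \<in> (insert (i,val,view st,clk) G)))"
    using hA h by (simp add: eq)
  have c2: "\<forall>a j. j \<in> key1_from s' a \<longrightarrow> j \<notin> F \<longrightarrow> CERT (insert (i,val,view st,clk) G) a (view s')"
    using hA h by (simp add: eq)
  have c3: "\<forall>a j. j \<in> key2_from s' a \<longrightarrow> j \<notin> F \<longrightarrow> CERT (insert (i,val,view st,clk) G) a (view s')"
    using hA h by (simp add: eq)
  have c4: "\<forall>a j. j \<in> key3_from s' a \<longrightarrow> j \<notin> F \<longrightarrow> CERT (insert (i,val,view st,clk) G) a (view s')"
    using hA h by (simp add: eq)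
  have c5: "\<forall>a. lock_from s' a \<subseteq> {1..n} \<and> (\<forall>j\<in>lock_from s' a. j \<notin> F \<longrightarrow> (j,a,view s') \<in> GL)"
    using hA h by (simp add: eq)
  have c6: "\<forall>m\<in>pending s'. msg_ok (insert (i,val,view st,clk) G) GL i m"
    using hA by (simp add: eq; auto simp add: msg_ok_def)
  have c7: "\<forall>j k w pk. proofs s' j = Some (k,w,pk) \<longrightarrow> pk < k \<and> k < int (view s') \<and> (j \<notin> F \<longrightarrow> GP (insert (i,val,view st,clk) G) k w pk)"
    using hA h by (simp add: eq)
  have c8: "0 \<le> key1 s' \<and> key1 s' \<le> int (view s') \<and> prev_key1 s' < key1 s' \<and> GP (insert (i,val,view st,clk) G) (key1 s') (key1_val s') (prev_key1 s')"
    using hA h by (simp add: eq)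
  have c9: "0 \<le> lock s' \<and> lock s' \<le> int (view s') \<and> (1 \<le> lock s' \<longrightarrow> CERT (insert (i,val,view st,clk) G) (lock_val s') (nat (lock s')))"
    using hA h by (simp add: eq)
  have c10: "\<forall>a vb. (i,a,vb) \<in> GL \<longrightarrow> int vb \<le> lock s' \<and> vb \<le> view s'"
    using hA h by (simp add: eq)
  have c11: "\<forall>a u t. (i,a,u,t) \<in> (insert (i,val,view st,clk) G) \<longrightarrow> u \<le> view s'"
    using h by (auto simp add: eq)
  have c12: "\<not> propose_recv s' \<longrightarrow> (\<forall>a t. (i,a,view s',t) \<notin> (insert (i,val,view st,clk) G))"
    using h ew by (simp add: eq)
  have c13: "echo_wait s' \<noteq> None \<longrightarrow> propose_recv s' \<and> (\<forall>a t. (i,a,view s',t) \<notin> (insert (i,val,view st,clk) G))"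
    by (simp add: eq)
  have c14: "\<forall>a. done_by_lock s' = Some a \<longrightarrow> (\<exists>vq. LQ GL a vq)"
    using hA h by (simp add: eq)
  show ?thesis unfolding LI_def by (rule conjI[OF c0 conjI[OF c1 conjI[OF c2 conjI[OF c3 conjI[OF c4 conjI[OF c5 conjI[OF c6 conjI[OF c7 conjI[OF c8 conjI[OF c9 conjI[OF c10 conjI[OF c11 conjI[OF c12 conjI[OF c13 c14]]]]]]]]]]]]]])
qed

lemma LI_int_prop:
  assumes li: "LI i st G GL" and eq: "s' = st\<lparr>proposed := True, pending := insert (MPropose k w (view st)) (pending st)\<rparr>"
  shows "LI i s' G GL"
proof -
  note h = li[unfolded LI_def]

  have c0: "1 \<le> view s'"
    using h by (simp add: eq)
  have c1: "\<forall>a. echo_from s' a \<subseteq> {1..n} \<and> (\<forall>j\<in>echo_from s' a. j \<notin> F \<longrightarrow> (\<exists>t. (j,a,view s',t) \<in> G))"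
    using h by (simp add: eq)
  have c2: "\<forall>a j. j \<in> key1_from s' a \<longrightarrow> j \<notin> F \<longrightarrow> CERT G a (view s')"
    using h by (simp add: eq)
  have c3: "\<forall>a j. j \<in> key2_from s' a \<longrightarrow> j \<notin> F \<longrightarrow> CERT G a (view s')"
    using h by (simp add: eq)
  have c4: "\<forall>a j. j \<in> key3_from s' a \<longrightarrow> j \<notin> F \<longrightarrow> CERT G a (view s')"
    using h by (simp add: eq)
  have c5: "\<forall>a. lock_from s' a \<subseteq> {1..n} \<and> (\<forall>j\<in>lock_from s' a. j \<notin> F \<longrightarrow> (j,a,view s') \<in> GL)"
    using h by (simp add: eq)
  have c6: "\<forall>m\<in>pending s'. msg_ok G GL i m"
    using h by (simp add: eq; auto simp add: msg_ok_def)
  have c7: "\<forall>j k w pk. proofs s' j = Some (k,w,pk) \<longrightarrow> pk < k \<and> k < int (view s') \<and> (j \<notin> F \<longrightarrow> GP G k w pk)"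
    using h by (simp add: eq)
  have c8: "0 \<le> key1 s' \<and> key1 s' \<le> int (view s') \<and> prev_key1 s' < key1 s' \<and> GP G (key1 s') (key1_val s') (prev_key1 s')"
    using h by (simp add: eq)
  have c9: "0 \<le> lock s' \<and> lock s' \<le> int (view s') \<and> (1 \<le> lock s' \<longrightarrow> CERT G (lock_val s') (nat (lock s')))"
    using h by (simp add: eq)
  have c10: "\<forall>a vb. (i,a,vb) \<in> GL \<longrightarrow> int vb \<le> lock s' \<and> vb \<le> view s'"
    using h by (simp add: eq)
  have c11: "\<forall>a u t. (i,a,u,t) \<in> G \<longrightarrow> u \<le> view s'"
    using h by (simp add: eq)
  have c12: "\<not> propose_recv s' \<longrightarrow> (\<forall>a t. (i,a,view s',t) \<notin> G)"
    using h by (simp add: eq)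
  have c13: "echo_wait s' \<noteq> None \<longrightarrow> propose_recv s' \<and> (\<forall>a t. (i,a,view s',t) \<notin> G)"
    using h by (simp add: eq)
  have c14: "\<forall>a. done_by_lock s' = Some a \<longrightarrow> (\<exists>vq. LQ GL a vq)"
    using h by (simp add: eq)
  show ?thesis unfolding LI_def by (rule conjI[OF c0 conjI[OF c1 conjI[OF c2 conjI[OF c3 conjI[OF c4 conjI[OF c5 conjI[OF c6 conjI[OF c7 conjI[OF c8 conjI[OF c9 conjI[OF c10 conjI[OF c11 conjI[OF c12 conjI[OF c13 c14]]]]]]]]]]]]]])
qed

lemma LI_habort: "LI p st G GL \<Longrightarrow> LI p (st\<lparr>habort := X\<rparr>) G GL"
  by (rule LI_frame) simp_all

lemma enter_view_snd: "snd (enter_view n' w st) = to_all n' (MRequest w)"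
  by (simp add: enter_view_def)

lemma enter_view_view: "view (fst (enter_view n' w st)) = w"
  by (simp add: enter_view_def)

lemma abort_OK:
  assumes li: "LI i st G GL"
  shows "LI i (fst (recv_abort n f i j v st)) G GL \<and> (\<forall>km\<in>set (snd (recv_abort n f i j v st)). msg_ok G GL i (snd km))"
proof -
  have A: "\<And>X. LI i (st\<lparr>habort := X\<rparr>) G GL" using LI_habort[OF li] .
  have B: "\<And>X w. view st \<le> w \<Longrightarrow> LI i (fst (enter_view n (Suc w) (st\<lparr>habort := X\<rparr>))) G GL"
    using LI_enter[OF A] by simp
  show ?thesis unfolding recv_abort_def Let_def
    using li A B by (auto simp: enter_view_snd to_all_def msg_ok_def)
qed

lemma OK_echo_msg:
  assumes li: "LI i st G GL" and gi: "GI G GL clk" and jn: "j \<in> {1..n}"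
    and ev: "j \<notin> F \<longrightarrow> (\<exists>t. (j,val,v,t) \<in> G)"
  shows "OK_step i (recv_echo n f j val v st) [] G GL clk"
proof (cases "v = view st")
  case False
  then have "recv_echo n f j val v st = st" by (simp add: recv_echo_def)
  then show ?thesis using OK_noghost[OF _ gi] li by simp
next
  case True
  show ?thesis
  proof (cases "crosses (n - f) (echo_from st val) (insert j (echo_from st val))")
    case True2: True
    have eq: "recv_echo n f j val v st = st\<lparr>echo_from := (echo_from st)(val := insert j (echo_from st val)), pending := insert (MKey1 val v) (pending st), prev_key1 := (if key1_val st \<noteq> val then key1 st else prev_key1 st), key1_val := val, key1 := int v\<rparr>"
      using True True2 by (simp add: recv_echo_def Let_def)
    show ?thesis using LI_echo_c[OF li eq True jn ev cross_quorum[OF True2] gi] OK_noghost[OF _ gi] by simp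
  next
    case False
    have eq: "recv_echo n f j val v st = st\<lparr>echo_from := (echo_from st)(val := insert j (echo_from st val))\<rparr>"
      using True False by (simp add: recv_echo_def Let_def)
    show ?thesis using LI_echo_nc[OF li eq True jn ev] OK_noghost[OF _ gi] by simp
  qed
qed

lemma OK_key1_msg:
  assumes li: "LI i st G GL" and gi: "GI G GL clk" and ck: "j \<notin> F \<longrightarrow> CERT G val v"
  shows "OK_step i (recv_key1 n f j val v st) [] G GL clk"
proof (cases "v = view st")
  case False
  then have "recv_key1 n f j val v st = st" by (simp add: recv_key1_def)
  then show ?thesis using OK_noghost[OF _ gi] li by simp
next
  case True
  show ?thesis
  proof (cases "crosses (n - f) (key1_from st val) (insert j (key1_from st val))")
    case True2: True
    have eq: "recv_key1 n f j val v st = st\<lparr>key1_from := (key1_from st)(val := insert j (key1_from st val)), pending := insert (MKey2 val v) (pending st), prev_key2 := (if key2_val st \<noteq> val then key2 st else prev_key2 st), key2_val := val, key2 := int v\<rparr>"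
      using True True2 by (simp add: recv_key1_def Let_def)
    show ?thesis using LI_key1_c[OF li eq True ck cross_quorum[OF True2]] OK_noghost[OF _ gi] by simp
  next
    case False
    have eq: "recv_key1 n f j val v st = st\<lparr>key1_from := (key1_from st)(val := insert j (key1_from st val))\<rparr>"
      using True False by (simp add: recv_key1_def Let_def)
    show ?thesis using LI_key1_nc[OF li eq True ck] OK_noghost[OF _ gi] by simp
  qed
qed

lemma OK_key2_msg:
  assumes li: "LI i st G GL" and gi: "GI G GL clk" and ck: "j \<notin> F \<longrightarrow> CERT G val v"
  shows "OK_step i (recv_key2 n f j val v st) [] G GL clk"
proof (cases "v = view st")
  case False
  then have "recv_key2 n f j val v st = st" by (simp add: recv_key2_def)
  then show ?thesis using OK_noghost[OF _ gi] li by simp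
next
  case True
  show ?thesis
  proof (cases "crosses (n - f) (key2_from st val) (insert j (key2_from st val))")
    case True2: True
    have eq: "recv_key2 n f j val v st = st\<lparr>key2_from := (key2_from st)(val := insert j (key2_from st val)), pending := insert (MKey3 val v) (pending st), key3 := int v, key3_val := val\<rparr>"
      using True True2 by (simp add: recv_key2_def Let_def)
    show ?thesis using LI_key2_c[OF li eq True ck cross_quorum[OF True2]] OK_noghost[OF _ gi] by simp
  next
    case False
    have eq: "recv_key2 n f j val v st = st\<lparr>key2_from := (key2_from st)(val := insert j (key2_from st val))\<rparr>"
      using True False by (simp add: recv_key2_def Let_def)
    show ?thesis using LI_key2_nc[OF li eq True ck] OK_noghost[OF _ gi] by simp
  qed
qed

lemma OK_key3_msg:
  assumes li: "LI i st G GL" and gi: "GI G GL clk" and iF: "i \<notin> F" and ck: "j \<notin> F \<longrightarrow> CERT G val v"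
  shows "OK_step i (recv_key3 n f j val v st) [] G GL clk"
proof (cases "v = view st")
  case False
  then have "recv_key3 n f j val v st = st" by (simp add: recv_key3_def)
  then show ?thesis using OK_noghost[OF _ gi] li by simp
next
  case True
  show ?thesis
  proof (cases "crosses (n - f) (key3_from st val) (insert j (key3_from st val))")
    case True2: True
    have eq: "recv_key3 n f j val v st = st\<lparr>key3_from := (key3_from st)(val := insert j (key3_from st val)), pending := insert (MLock val v) (pending st), lock := int v, lock_val := val\<rparr>"
      using True True2 by (simp add: recv_key3_def Let_def)
    have E: "CERT G val v"
    proof (rule card_quorum_nonF[OF cross_quorum[OF True2]])
      fix j' assume "j' \<in> insert j (key3_from st val)" "j' \<notin> F"
      then show "CERT G val v" using li[unfolded LI_def] ck True by auto
    qed
    have l: "LI i (recv_key3 n f j val v st) G (insert (i,val,v) GL)"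
      using LI_key3_c[OF li eq True ck cross_quorum[OF True2]] .
    have g: "GI G (insert (i,val,v) GL) clk" using GI_lock[OF gi li iF] E True by simp
    show ?thesis using OK_lock[OF l g] .
  next
    case False
    have eq: "recv_key3 n f j val v st = st\<lparr>key3_from := (key3_from st)(val := insert j (key3_from st val))\<rparr>"
      using True False by (simp add: recv_key3_def Let_def)
    show ?thesis using LI_key3_nc[OF li eq True ck] OK_noghost[OF _ gi] by simp
  qed
qed

lemma OK_lock_msg:
  assumes li: "LI i st G GL" and gi: "GI G GL clk" and jn: "j \<in> {1..n}" and gl: "j \<notin> F \<longrightarrow> (j,val,v) \<in> GL"
  shows "OK_step i (fst (recv_lock n f j val v st)) (snd (recv_lock n f j val v st)) G GL clk"
proof (cases "v = view st")
  case False
  then have "recv_lock n f j val v st = (st, [])" by (simp add: recv_lock_def)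
  then show ?thesis using OK_noghost[OF _ gi] li by simp
next
  case True
  show ?thesis
  proof (cases "crosses (n - f) (lock_from st val) (insert j (lock_from st val)) \<and> \<not> done_sent st")
    case True2: True
    have eq: "recv_lock n f j val v st = (st\<lparr>lock_from := (lock_from st)(val := insert j (lock_from st val)), done_sent := True, done_by_lock := Some val\<rparr>, to_all n (MDone val))"
      using True True2 by (simp add: recv_lock_def Let_def)
    have c: "n - f \<le> card (insert j (lock_from st val))" using True2 cross_quorum by blast
    show ?thesis using LI_lock_c[OF li refl True jn gl c] OK_noghost[OF _ gi] eq
      by (simp add: to_all_def msg_ok_def)
  next
    case False
    have eq: "recv_lock n f j val v st = (st\<lparr>lock_from := (lock_from st)(val := insert j (lock_from st val))\<rparr>, [])"
      using True False by (auto simp add: recv_lock_def Let_def)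
    show ?thesis using LI_lock_nc[OF li refl True jn gl] OK_noghost[OF _ gi] eq by simp
  qed
qed

lemma OK_propose_msg:
  assumes li: "LI i st G GL" and gi: "GI G GL clk" and iF: "i \<notin> F"
  shows "OK_step i (recv_propose n j key val v st) [] G GL clk"
proof (cases "v = view st \<and> j = primary n v \<and> \<not> propose_recv st")
  case False
  then have "recv_propose n j key val v st = st" unfolding recv_propose_def by auto
  then show ?thesis using OK_noghost[OF _ gi] li by simp
next
  case True
  then have vv: "v = view st" and np: "\<not> propose_recv st" by auto
  show ?thesis
  proof (cases "lock st = 0 \<or> val = lock_val st")
    case True2: True
    have eq: "recv_propose n j key val v st = st\<lparr>propose_recv := True, pending := insert (MEcho val v) (pending st)\<rparr>"
      using True True2 by (simp add: recv_propose_def Let_def)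
    have l: "LI i (recv_propose n j key val v st) (insert (i,val,v,clk) G) GL" using LI_prop_echo[OF li eq vv np] .
    have noev: "\<forall>a t. (i,a,view st,t) \<notin> G" using li[unfolded LI_def] np by blast
    have g: "GI (insert (i,val,v,clk) G) GL (Suc clk)" using GI_echo[OF gi li iF noev] True2 vv by auto
    show ?thesis using OK_echo[OF l g] .
  next
    case False2: False
    show ?thesis
    proof (cases "int v > key \<and> key \<ge> lock st")
      case True3: True
      have eq: "recv_propose n j key val v st = st\<lparr>propose_recv := True, echo_wait := Some val\<rparr>"
        using True False2 True3 by (simp add: recv_propose_def Let_def)
      show ?thesis using LI_prop_wait[OF li eq vv np] OK_noghost[OF _ gi] by simp
    next
      case False3: False
      have eq: "recv_propose n j key val v st = st\<lparr>propose_recv := True\<rparr>"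
        using True False2 False3 by (auto simp add: recv_propose_def Let_def)
      show ?thesis using LI_prop_none[OF li eq np] OK_noghost[OF _ gi] by simp
    qed
  qed
qed

lemma deliver_OK:
  assumes li: "LI i st G GL" and gi: "GI G GL clk" and iF: "i \<notin> F" and jn: "j \<in> {1..n}"
    and mo: "j \<notin> F \<longrightarrow> msg_ok G GL j m"
  shows "OK_step i (fst (deliver n f i j m st)) (snd (deliver n f i j m st)) G GL clk"
proof (cases m)
  case (MRequest v)
  have "LI i (st\<lparr>hreq := (hreq st)(j := max (hreq st j) v)\<rparr>) G GL" by (rule LI_frame[OF li]) simp_all
  then show ?thesis using MRequest OK_noghost[OF _ gi] by (simp add: deliver_def)
next
  case (MDone val)
  have "LI i (fst (recv_done n f j val st)) G GL" by (rule LI_frame[OF li]) (simp_all add: recv_done_def Let_def)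
  moreover have "\<forall>km\<in>set (snd (recv_done n f j val st)). msg_ok G GL i (snd km)"
    by (simp add: recv_done_def Let_def to_all_def msg_ok_def)
  ultimately show ?thesis using MDone OK_noghost[OF _ gi] by (simp add: deliver_def)
next
  case (MAbort v)
  then show ?thesis using abort_OK[OF li] OK_noghost[OF _ gi] by (simp add: deliver_def)
next
  case (MSuggest k3 v3 k2 v2 pk2 v)
  have "LI i (recv_suggest n i j k3 v3 k2 v2 pk2 v st) G GL"
    by (rule LI_frame[OF li]) (simp_all add: recv_suggest_def Let_def)
  then show ?thesis using MSuggest OK_noghost[OF _ gi] by (simp add: deliver_def)
next
  case (MProof k1 v1 pk1 v)
  then have "j \<notin> F \<longrightarrow> GP G k1 v1 pk1" using mo by (simp add: msg_ok_def)
  then show ?thesis using MProof LI_recv_proof[OF li] OK_noghost[OF _ gi] by (simp add: deliver_def)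
next
  case (MPropose key val v)
  then show ?thesis using OK_propose_msg[OF li gi iF] by (simp add: deliver_def)
next
  case (MEcho val v)
  then have "j \<notin> F \<longrightarrow> (\<exists>t. (j,val,v,t) \<in> G)" using mo by (simp add: msg_ok_def)
  then show ?thesis using MEcho OK_echo_msg[OF li gi jn] by (simp add: deliver_def)
next
  case (MKey1 val v)
  then have "j \<notin> F \<longrightarrow> CERT G val v" using mo by (simp add: msg_ok_def)
  then show ?thesis using MKey1 OK_key1_msg[OF li gi] by (simp add: deliver_def)
next
  case (MKey2 val v)
  then have "j \<notin> F \<longrightarrow> CERT G val v" using mo by (simp add: msg_ok_def)
  then show ?thesis using MKey2 OK_key2_msg[OF li gi] by (simp add: deliver_def)
next
  case (MKey3 val v)
  then have "j \<notin> F \<longrightarrow> CERT G val v" using mo by (simp add: msg_ok_def)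
  then show ?thesis using MKey3 OK_key3_msg[OF li gi iF] by (simp add: deliver_def)
next
  case (MLock val v)
  then have "j \<notin> F \<longrightarrow> (j,val,v) \<in> GL" using mo by (simp add: msg_ok_def)
  then show ?thesis using MLock OK_lock_msg[OF li gi jn] by (simp add: deliver_def)
qed

lemma int_join:
  assumes li: "LI i st G GL" and gi: "GI G GL clk" and m: "m \<in> pending st"
    and eq: "s' = st\<lparr>joined := insert (j, m) (joined st)\<rparr>" and o: "outs = [(j, m)]"
  shows "OK_step i s' outs G GL clk"
proof -
  have "LI i s' G GL" unfolding eq by (rule LI_frame[OF li]) simp_all
  moreover have "msg_ok G GL i m" using li[unfolded LI_def] m by blast
  ultimately show ?thesis using OK_noghost[OF _ gi] o by simp
qed

lemma int_sugg:
  assumes li: "LI i st G GL" and gi: "GI G GL clk"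
    and eq: "s' = st\<lparr>suggest_sent := True\<rparr>" and o: "outs = [(q, MSuggest a b c d e g)]"
  shows "OK_step i s' outs G GL clk"
proof -
  have "LI i s' G GL" unfolding eq by (rule LI_frame[OF li]) simp_all
  then show ?thesis using OK_noghost[OF _ gi] o by (simp add: msg_ok_def)
qed

lemma int_wait:
  assumes li: "LI i st G GL" and gi: "GI G GL clk"
    and eq: "s' = st\<lparr>suggestions := X, sugg_wait := Y\<rparr>" and o: "outs = []"
  shows "OK_step i s' outs G GL clk"
proof -
  have "LI i s' G GL" unfolding eq by (rule LI_frame[OF li]) simp_all
  then show ?thesis using OK_noghost[OF _ gi] o by simp
qed

lemma int_prop:
  assumes li: "LI i st G GL" and gi: "GI G GL clk"
    and eq: "s' = st\<lparr>proposed := True, pending := insert (MPropose k w (view st)) (pending st)\<rparr>" and o: "outs = []"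
  shows "OK_step i s' outs G GL clk"
  using LI_int_prop[OF li eq] OK_noghost[OF _ gi] o by simp

lemma int_timer:
  assumes li: "LI i st G GL" and gi: "GI G GL clk"
    and eq: "s' = st\<lparr>timer_fired := True\<rparr>" and o: "outs = to_all n (MAbort (view st))"
  shows "OK_step i s' outs G GL clk"
proof -
  have "LI i s' G GL" unfolding eq by (rule LI_frame[OF li]) simp_all
  then show ?thesis using OK_noghost[OF _ gi] o by (simp add: msg_ok_def to_all_def)
qed

lemma int_echo:
  assumes li: "LI i st G GL" and gi: "GI G GL clk" and iF: "i \<notin> F"
    and ew: "echo_wait st = Some val"
    and cd: "f + 1 \<le> card {l. \<exists>k w pk. proofs st l = Some (k, w, pk) \<and>
                            (lock st \<le> pk \<or> (lock st \<le> k \<and> w \<noteq> lock_val st))}"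
    and eq: "s' = st\<lparr>echo_wait := None, pending := insert (MEcho val (view st)) (pending st)\<rparr>" and o: "outs = []"
  shows "OK_step i s' outs G GL clk"
proof -
  let ?A = "{l. \<exists>k w pk. proofs st l = Some (k, w, pk) \<and> (lock st \<le> pk \<or> (lock st \<le> k \<and> w \<noteq> lock_val st))}"
  have "card F < card ?A" using cd cF by linarith
  moreover then have "finite ?A" using card_gt_0_iff by fastforce
  ultimately obtain l where "l \<in> ?A" "l \<notin> F" using exists_nonF by blast
  then obtain k w pk where kw: "proofs st l = Some (k, w, pk)" "lock st \<le> pk \<or> (lock st \<le> k \<and> w \<noteq> lock_val st)" by blast
  have "pk < k \<and> k < int (view st) \<and> (l \<notin> F \<longrightarrow> GP G k w pk)" using li[unfolded LI_def] kw(1) by blast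
  then have cond: "lock st = 0 \<or> val = lock_val st \<or> (\<exists>k w pk. pk < k \<and> k < int (view st) \<and> GP G k w pk \<and>
                  (lock st \<le> pk \<or> (lock st \<le> k \<and> w \<noteq> lock_val st)))" using kw(2) \<open>l \<notin> F\<close> by blast
  have noev: "\<forall>a t. (i,a,view st,t) \<notin> G" using li[unfolded LI_def] ew by blast
  have l: "LI i s' (insert (i,val,view st,clk) G) GL" using LI_int_echo[OF li eq ew] .
  have g: "GI (insert (i,val,view st,clk) G) GL (Suc clk)" using GI_echo[OF gi li iF noev cond] .
  show ?thesis using OK_echo[OF l g] o by simp
qed

lemma internal_OK:
  assumes li: "LI i st G GL" and gi: "GI G GL clk" and iF: "i \<notin> F"
    and step: "internal_step n f i st s' outs"
  shows "OK_step i s' outs G GL clk"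
  using step unfolding internal_step_def
  apply (elim disjE exE conjE)
       apply (rule int_join[OF li gi]; assumption)
      apply (rule int_sugg[OF li gi]; assumption)
     apply (rule int_wait[OF li gi]; assumption)
    apply (rule int_prop[OF li gi]; assumption)
   apply (rule int_echo[OF li gi iF]; assumption)
  apply (rule int_timer[OF li gi]; assumption)
  done

lemma INV_step:
  assumes inv: "INV s G GL clk" and i: "i \<in> {1..n}" "i \<notin> F"
    and ok: "OK_step i st' outs G GL clk" and N0: "\<forall>e. e \<in># N0 \<longrightarrow> e \<in># net s"
  shows "\<exists>G' GL' clk'. INV \<lparr>loc = (loc s)(i := st'), net = N0 + mset (map (\<lambda>(k, m'). (i, k, m')) outs)\<rparr> G' GL' clk'"
proof -
  obtain G' GL' clk' where o: "G \<subseteq> G'" "GL \<subseteq> GL'" "\<forall>e\<in>G' - G. fst e = i" "\<forall>e\<in>GL' - GL. fst e = i"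
    "LI i st' G' GL'" "GI G' GL' clk'" "\<forall>km\<in>set outs. msg_ok G' GL' i (snd km)"
    using ok unfolding OK_step_def by blast
  have ni: "NI G GL (net s)" and lis: "\<forall>p. p \<in> {1..n} \<longrightarrow> p \<notin> F \<longrightarrow> LI p (loc s p) G GL"
    using inv unfolding INV_def by auto
  have ni': "NI G' GL' (N0 + mset (map (\<lambda>(k, m'). (i, k, m')) outs))"
    unfolding NI_def
  proof (intro allI impI)
    fix j k m assume a: "(j,k,m) \<in># N0 + mset (map (\<lambda>(k, m'). (i, k, m')) outs)"
    show "j \<in> {1..n} \<and> (j \<notin> F \<longrightarrow> msg_ok G' GL' j m)"
    proof (cases "(j,k,m) \<in># N0")
      case True
      then have "(j,k,m) \<in># net s" using N0 by blast
      then have "j \<in> {1..n} \<and> (j \<notin> F \<longrightarrow> msg_ok G GL j m)" using ni unfolding NI_def by blast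
      then show ?thesis using msg_ok_mono o(1,2) by blast
    next
      case False
      then have "(j,k,m) \<in> set (map (\<lambda>(k, m'). (i, k, m')) outs)" using a by simp
      then have "j = i" "(k,m) \<in> set outs" by auto
      then show ?thesis using o(7) i by fastforce
    qed
  qed
  have li': "\<forall>p. p \<in> {1..n} \<longrightarrow> p \<notin> F \<longrightarrow> LI p (((loc s)(i := st')) p) G' GL'"
  proof (intro allI impI)
    fix p assume p: "p \<in> {1..n}" "p \<notin> F"
    show "LI p (((loc s)(i := st')) p) G' GL'"
    proof (cases "p = i")
      case True then show ?thesis using o(5) by simp
    next
      case False
      have "\<forall>e\<in>G' - G. fst e \<noteq> p" "\<forall>e\<in>GL' - GL. fst e \<noteq> p" using o(3,4) False by auto
      then show ?thesis using LI_mono[OF _ o(1,2)] lis p False by simp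
    qed
  qed
  have "INV \<lparr>loc = (loc s)(i := st'), net = N0 + mset (map (\<lambda>(k, m'). (i, k, m')) outs)\<rparr> G' GL' clk'"
    unfolding INV_def gst.select_convs by (rule conjI[OF o(6) conjI[OF ni' li']])
  then show ?thesis by blast
qed

lemma LI_init: "LI p (init_local n x p) {} {}"
  unfolding LI_def init_local_def enter_view_def base_state_def by (simp add: msg_ok_def GP_def)

lemma inv_reach: "reachable n f F x s \<Longrightarrow> \<exists>G GL clk. INV s G GL clk"
proof (induction rule: reachable.induct)
  case init
  have "GI {} {} 0" unfolding GI_def by simp
  moreover have "NI {} {} (net (init_gst n F x))" unfolding NI_def init_gst_def by (auto simp: msg_ok_def)
  moreover have "\<forall>p. p \<in> {1..n} \<longrightarrow> p \<notin> F \<longrightarrow> LI p (loc (init_gst n F x) p) {} {}"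
    unfolding init_gst_def gst.select_convs by (intro allI impI) (rule LI_init)
  ultimately show ?case unfolding INV_def by blast
next
  case (deliver_step s j i m s' outs)
  obtain G GL clk where inv: "INV s G GL clk" using deliver_step.IH by blast
  have gi: "GI G GL clk" and ni: "NI G GL (net s)" and li: "LI i (loc s i) G GL"
    using inv deliver_step.hyps unfolding INV_def by auto
  have "j \<in> {1..n} \<and> (j \<notin> F \<longrightarrow> msg_ok G GL j m)" using ni deliver_step.hyps(2) unfolding NI_def by blast
  then have ok: "OK_step i s' outs G GL clk"
    using deliver_OK[OF li gi deliver_step.hyps(4), of j m] deliver_step.hyps(6) by simp
  have "\<forall>e. e \<in># net s - {#(j, i, m)#} \<longrightarrow> e \<in># net s" by (meson in_diffD)
  then show ?case using INV_step[OF inv deliver_step.hyps(3,4) ok] by blast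
next
  case (internal s i s' outs)
  obtain G GL clk where inv: "INV s G GL clk" using internal.IH by blast
  have gi: "GI G GL clk" and li: "LI i (loc s i) G GL"
    using inv internal.hyps unfolding INV_def by auto
  have ok: "OK_step i s' outs G GL clk" using internal_OK[OF li gi internal.hyps(3,5)] .
  have "\<forall>e. e \<in># net s \<longrightarrow> e \<in># net s" by blast
  then show ?case using INV_step[OF inv internal.hyps(2,3) ok] by blast
next
  case (byzantine s j k m)
  obtain G GL clk where inv: "INV s G GL clk" using byzantine.IH by blast
  have "j \<in> {1..n}" using byzantine.hyps(2) FS by blast
  then have "NI G GL (net s + {#(j, k, m)#})" using inv byzantine.hyps(2) unfolding INV_def NI_def by auto
  then have "INV (s\<lparr>net := net s + {#(j, k, m)#}\<rparr>) G GL clk" using inv unfolding INV_def by simp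
  then show ?case by blast
qed

lemma main_safety:
  assumes r: "reachable n f F x s"
    and i: "i \<in> {1..n}" "i \<notin> F" and i': "i' \<in> {1..n}" "i' \<notin> F"
    and d: "done_by_lock (loc s i) = Some val" and d': "done_by_lock (loc s i') = Some val'"
  shows "val = val'"
proof -
  obtain G GL clk where inv: "INV s G GL clk" using inv_reach[OF r] by blast
  have gi: "GI G GL clk" using inv unfolding INV_def by blast
  have l1: "LI i (loc s i) G GL" and l2: "LI i' (loc s i') G GL" using inv i i' unfolding INV_def by auto
  have "\<forall>a. done_by_lock (loc s i) = Some a \<longrightarrow> (\<exists>v. LQ GL a v)" using l1 unfolding LI_def by meson
  then have "\<exists>v. LQ GL val v" using d by simp
  then obtain v where lq: "LQ GL val v" by (elim exE)
  have "\<forall>a. done_by_lock (loc s i') = Some a \<longrightarrow> (\<exists>v. LQ GL a v)" using l2 unfolding LI_def by meson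
  then have "\<exists>v. LQ GL val' v" using d' by simp
  then obtain v' where lq': "LQ GL val' v'" by (elim exE)
  have key: "a = b" if q1: "LQ GL a u" and q2: "LQ GL b w" and q3: "u \<le> w" for a b u w
  proof -
    obtain S where S: "S \<subseteq> {1..n}" "n - f \<le> card S" "\<forall>j\<in>S. j \<notin> F \<longrightarrow> (j,a,u) \<in> GL"
      apply (insert q1[unfolded LQ_def]) apply (elim exE conjE) apply (rule that) apply assumption+ done
    obtain S' where S': "S' \<subseteq> {1..n}" "n - f \<le> card S'" "\<forall>j\<in>S'. j \<notin> F \<longrightarrow> (j,b,w) \<in> GL"
      apply (insert q2[unfolded LQ_def]) apply (elim exE conjE) apply (rule that) apply assumption+ done
    obtain j where j: "j \<in> S'" "j \<notin> F" using quorum_nonF[OF S'(2)] by blast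
    have "(j,b,w) \<in> GL" using S'(3) j by blast
    then have cb: "CERT G b w" using GI_GL[OF gi _ j(2)] by blast
    have "card S - card F \<le> card (S - F)" by (rule diff_card_le_card_Diff[OF finF])
    then have cL: "f + 1 \<le> card (S - F)" using S(2) cF nf by linarith
    have L1: "S - F \<subseteq> {1..n}" using S(1) by blast
    have L2: "(S - F) \<inter> F = {}" by blast
    have L4: "\<forall>l\<in>S - F. (l,a,u) \<in> GL" using S(3) by blast
    have "b = a" using safety[OF gi L1 L2 cL L4 q3 cb] .
    then show ?thesis by simp
  qed
  show ?thesis
  proof (cases "v \<le> v'")
    case True then show ?thesis using key[OF lq lq'] by blast
  next
    case False then show ?thesis using key[OF lq' lq] by simp
  qed
qed
end

theorem lemma2p5:
  fixes n f :: nat and F :: "nat set" and x :: "nat \<Rightarrow> 'v" and s :: "'v gst"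
  assumes "3 * f < n"
    and "F \<subseteq> {1..n}" and "card F \<le> f"
    and "reachable n f F x s"
    and "i \<in> {1..n}" and "i \<notin> F" and "i' \<in> {1..n}" and "i' \<notin> F"
    and "done_by_lock (loc s i) = Some val"
    and "done_by_lock (loc s i') = Some val'"
  shows "val = val'"
proof -
  interpret itsys n f F using assms(1-3) by unfold_locales
  show ?thesis using main_safety[OF assms(4-10)] .
qed

end
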